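(* Let $\Omega\subseteq\mathbb{R}^n$ be bounded and measurable, $Y$ a Hilbert space, $S:L^2(\Omega)\to Y$ linear and continuous, $z\in Y$, $u_a,u_b\in L^\infty(\Omega)$, $u_a\le u_b$, $U_{\mathrm{ad}}=\{u\in L^2(\Omega):u_a\le u\le u_b\text{ a.e.}\}$, and let $(S_h)_h$, $\delta$ be as in the context. Let $u^\dagger$ be a solution of $\min_{u\in U_{\mathrm{ad}}}\frac12\|Su-z\|_Y^2$ satisfying the Active Set Condition (see context). Let $h_{\max}>0$ and $\varepsilon_k=0$ for all $k$, and for each $h$ let $(u_k^{\mathrm{in}})_k$ be generated by the inexact Bregman algorithm of the context. Then there exists a constant $C$ such that for every $0<h\le h_{\max}$ there exists a stopping index $k(h)$ with \[\sum_{i=1}^{k(h)}H_i\le C<\infty,\qquad H_i:=\delta(h)\Big(\frac{\rho_i}{\alpha_i}+\frac{\gamma_{i-1}}{\alpha_i}+\frac{\gamma_{i-1}\rho_i}{\alpha_i}\Big)+\delta(h)^2\Big(\frac{\rho_i^2}{\alpha_i^2}+\frac{\rho_i^2}{\alpha_i}\Big),\] and $k(h)\to\infty$ as $h\to0$. Furthermore $\min_{i=1,\dots,k(h)}\|u_i^{\mathrm{in}}-u^\dagger\|\to0$ as $h\to0$.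
   Context: $\|\cdot\|$: $L^2(\Omega)$ norm; $P_{U_{\mathrm{ad}}}$: $L^2$-projection onto $U_{\mathrm{ad}}$; $\chi_I$: characteristic function; $|\cdot|$: Lebesgue measure. Active Set Condition, with $p^\dagger:=S^\ast(z-Su^\dagger)$: there exist $I\subseteq\Omega$, $w\in Y$, constants $\kappa,c>0$ with (1) $I\supseteq\{p^\dagger=0\}$ and $\chi_Iu^\dagger=\chi_IP_{U_{\mathrm{ad}}}(S^\ast w)$; (2) with $A:=\Omega\setminus I$, $|\{x\in A:0<|p^\dagger(x)|<\varepsilon\}|\le c\varepsilon^\kappa$ for all $\varepsilon>0$; (3) $S^\ast w\in L^\infty(\Omega)$. For each $h>0$, $S_h:L^2(\Omega)\to Y$ is linear continuous with finite-dimensional range, and there is a continuous, monotonically increasing $\delta:\mathbb{R}^+\to\mathbb{R}^+$, $\delta(0)=0$, with $\|(S-S_h)u_h\|_Y+\|(S^\ast-S_h^\ast)(S_hu_h-z)\|\le\delta(h)$ for all $h\ge0$, $u_h\in U_{\mathrm{ad}}$. $(\alpha_k)_k$ bounded sequence of positive reals, $\gamma_k:=\sum_{j=1}^k\alpha_j^{-1}$ ($\gamma_0=0$), $\rho_k:=\sqrt{\alpha_k^{-1}(1+\alpha_k^{-1})}$. $\mathcal B(\alpha,\lambda,u):=(1+\frac1\alpha)\|u-P_{U_{\mathrm{ad}}}(\frac1\alpha S_h^\ast(z-S_hu)+\lambda)\|$. Inexact Bregman algorithm: $u_0^{\mathrm{in}}=P_{U_{\mathrm{ad}}}(0)$, $\lambda_0^{\mathrm{in}}=0$;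 for $k\ge1$ find $u_k^{\mathrm{in}}\in U_{\mathrm{ad}}$ with $\mathcal B(\alpha_k,\lambda_{k-1}^{\mathrm{in}},u_k^{\mathrm{in}})\le\varepsilon_k$, then set $\lambda_k^{\mathrm{in}}=\sum_{i=1}^k\frac1{\alpha_i}S_h^\ast(z-S_hu_i^{\mathrm{in}})$. *)

theory Defs
  imports "HOL-Analysis.Analysis"
begin

text \<open>Elements of L2(Omega) are represented by real-valued functions on the ambient
  Euclidean space; only their values on Omega matter (all integrals are w.r.t.
  Lebesgue measure restricted to Omega).\<close>

definition L2 :: "'a::euclidean_space set \<Rightarrow> ('a \<Rightarrow> real) set" where
  "L2 \<Omega> = {f. f \<in> borel_measurable (lebesgue_on \<Omega>) \<and>
                integrable (lebesgue_on \<Omega>) (\<lambda>x. (f x)\<^sup>2)}"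

definition L2inner :: "'a::euclidean_space set \<Rightarrow> ('a \<Rightarrow> real) \<Rightarrow> ('a \<Rightarrow> real) \<Rightarrow> real" where
  "L2inner \<Omega> f g = integral\<^sup>L (lebesgue_on \<Omega>) (\<lambda>x. f x * g x)"

definition L2norm :: "'a::euclidean_space set \<Rightarrow> ('a \<Rightarrow> real) \<Rightarrow> real" where
  "L2norm \<Omega> f = sqrt (L2inner \<Omega> f f)"

definition Linfty :: "'a::euclidean_space set \<Rightarrow> ('a \<Rightarrow> real) \<Rightarrow> bool" where
  "Linfty \<Omega> f \<longleftrightarrow> f \<in> borel_measurable (lebesgue_on \<Omega>) \<and>
      (\<exists>B. AE x in lebesgue_on \<Omega>. \<bar>f x\<bar> \<le> B)"

definition Uad :: "'a::euclidean_space set \<Rightarrow> ('a \<Rightarrow> real) \<Rightarrow> ('a \<Rightarrow> real) \<Rightarrow> ('a \<Rightarrow> real) set" where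
  "Uad \<Omega> ua ub = {u \<in> L2 \<Omega>. AE x in lebesgue_on \<Omega>. ua x \<le> u x \<and> u x \<le> ub x}"

definition L2proj :: "'a::euclidean_space set \<Rightarrow> ('a \<Rightarrow> real) set \<Rightarrow> ('a \<Rightarrow> real) \<Rightarrow> ('a \<Rightarrow> real)" where
  "L2proj \<Omega> K v = (SOME p. p \<in> K \<and>
      (\<forall>q\<in>K. L2norm \<Omega> (\<lambda>x. v x - p x) \<le> L2norm \<Omega> (\<lambda>x. v x - q x)))"

definition bounded_linear_L2 :: "'a::euclidean_space set \<Rightarrow> (('a \<Rightarrow> real) \<Rightarrow> 'y::real_normed_vector) \<Rightarrow> bool" where
  "bounded_linear_L2 \<Omega> T \<longleftrightarrow>
     (\<forall>f\<in>L2 \<Omega>. \<forall>g\<in>L2 \<Omega>. \<forall>a b. T (\<lambda>x. a * f x + b * g x) = a *\<^sub>R T f + b *\<^sub>R T g) \<and>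
     (\<exists>K. \<forall>f\<in>L2 \<Omega>. norm (T f) \<le> K * L2norm \<Omega> f)"

definition is_adjoint :: "'a::euclidean_space set \<Rightarrow> (('a \<Rightarrow> real) \<Rightarrow> 'y::real_inner) \<Rightarrow> ('y \<Rightarrow> 'a \<Rightarrow> real) \<Rightarrow> bool" where
  "is_adjoint \<Omega> T Tadj \<longleftrightarrow> (\<forall>y. Tadj y \<in> L2 \<Omega>) \<and>
      (\<forall>f\<in>L2 \<Omega>. \<forall>y. inner (T f) y = L2inner \<Omega> f (Tadj y))"

definition finite_dim_range :: "'a::euclidean_space set \<Rightarrow> (('a \<Rightarrow> real) \<Rightarrow> 'y::real_vector) \<Rightarrow> bool" where
  "finite_dim_range \<Omega> T \<longleftrightarrow> (\<exists>B. finite B \<and> T ` L2 \<Omega> \<subseteq> span B)"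

definition active_set_condition ::
  "'a::euclidean_space set \<Rightarrow> ('a \<Rightarrow> real) \<Rightarrow> ('a \<Rightarrow> real) \<Rightarrow> ('y::real_inner \<Rightarrow> 'a \<Rightarrow> real)
     \<Rightarrow> (('a \<Rightarrow> real) \<Rightarrow> 'y) \<Rightarrow> 'y \<Rightarrow> ('a \<Rightarrow> real) \<Rightarrow> bool" where
  "active_set_condition \<Omega> ua ub Sadj S z udag \<longleftrightarrow>
     (let p = Sadj (z - S udag) in
      \<exists>I w \<kappa> c. I \<in> sets lebesgue \<and> I \<subseteq> \<Omega> \<and> \<kappa> > 0 \<and> c > 0 \<and>
        {x \<in> \<Omega>. p x = 0} \<subseteq> I \<and>
        (AE x in lebesgue_on \<Omega>. x \<in> I \<longrightarrow> udag x = L2proj \<Omega> (Uad \<Omega> ua ub) (Sadj w) x) \<and>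
        (\<forall>\<epsilon>>0. measure lebesgue {x \<in> \<Omega> - I. 0 < \<bar>p x\<bar> \<and> \<bar>p x\<bar> < \<epsilon>} \<le> c * \<epsilon> powr \<kappa>) \<and>
        Linfty \<Omega> (Sadj w))"

definition gam :: "(nat \<Rightarrow> real) \<Rightarrow> nat \<Rightarrow> real" where
  "gam \<alpha> k = (\<Sum>j=1..k. 1 / \<alpha> j)"

definition rho :: "(nat \<Rightarrow> real) \<Rightarrow> nat \<Rightarrow> real" where
  "rho \<alpha> k = sqrt (1 / \<alpha> k * (1 + 1 / \<alpha> k))"

definition Hterm :: "(real \<Rightarrow> real) \<Rightarrow> real \<Rightarrow> (nat \<Rightarrow> real) \<Rightarrow> nat \<Rightarrow> real" where
  "Hterm \<delta> h \<alpha> i =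
     \<delta> h * (rho \<alpha> i / \<alpha> i + gam \<alpha> (i - 1) / \<alpha> i + gam \<alpha> (i - 1) * rho \<alpha> i / \<alpha> i)
     + (\<delta> h)\<^sup>2 * ((rho \<alpha> i)\<^sup>2 / (\<alpha> i)\<^sup>2 + (rho \<alpha> i)\<^sup>2 / \<alpha> i)"

definition bregman_B ::
  "'a::euclidean_space set \<Rightarrow> ('a \<Rightarrow> real) \<Rightarrow> ('a \<Rightarrow> real) \<Rightarrow> (('a \<Rightarrow> real) \<Rightarrow> 'y::real_inner)
     \<Rightarrow> ('y \<Rightarrow> 'a \<Rightarrow> real) \<Rightarrow> 'y \<Rightarrow> real \<Rightarrow> ('a \<Rightarrow> real) \<Rightarrow> ('a \<Rightarrow> real) \<Rightarrow> real" where
  "bregman_B \<Omega> ua ub Sh Shadj z \<alpha> lam u =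
     (1 + 1 / \<alpha>) * L2norm \<Omega> (\<lambda>x. u x -
        L2proj \<Omega> (Uad \<Omega> ua ub) (\<lambda>y. 1 / \<alpha> * Shadj (z - Sh u) y + lam y) x)"

definition bregman_lambda ::
  "(('a \<Rightarrow> real) \<Rightarrow> 'y::real_inner) \<Rightarrow> ('y \<Rightarrow> 'a \<Rightarrow> real) \<Rightarrow> 'y \<Rightarrow> (nat \<Rightarrow> real)
     \<Rightarrow> (nat \<Rightarrow> 'a \<Rightarrow> real) \<Rightarrow> nat \<Rightarrow> 'a \<Rightarrow> real" where
  "bregman_lambda Sh Shadj z \<alpha> u k = (\<lambda>x. \<Sum>i=1..k. 1 / \<alpha> i * Shadj (z - Sh (u i)) x)"

end

theory Submission
  imports Defs
begin

lemma gam_Suc: "gam a (Suc K) = gam a K + 1 / a (Suc K)"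
  by (simp add: gam_def sum.cl_ivl_Suc)

lemma gam_0[simp]: "gam a 0 = 0" by (simp add: gam_def)

lemma gam_nonneg: "(\<And>k. k \<ge> 1 \<Longrightarrow> a k > 0) \<Longrightarrow> 0 \<le> gam a K"
  unfolding gam_def by (intro sum_nonneg) (simp add: less_imp_le)

lemma gam_mono: "(\<And>k. k \<ge> 1 \<Longrightarrow> a k > 0) \<Longrightarrow> k \<le> K \<Longrightarrow> gam a k \<le> gam a K"
proof (induction K)
  case 0 then show ?case by simp
next
  case (Suc K)
  show ?case
  proof (cases "k = Suc K")
    case True then show ?thesis by simp
  next
    case False
    then have "gam a k \<le> gam a K" using Suc by simp
    moreover have "0 < a (Suc K)" using Suc.prems by simp
    ultimately show ?thesis by (simp add: gam_Suc add_increasing2)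
  qed
qed

lemma tele_alg:
  fixes X g b :: real
  assumes "g \<le> b"
  shows "(b - g) * max 0 (X - b) \<le> ((max 0 (X - g))\<^sup>2 - (max 0 (X - b))\<^sup>2) / 2"
proof (cases "b \<le> X")
  case True
  have "(b - g) * (X - b) \<le> ((X - g)\<^sup>2 - (X - b)\<^sup>2) / 2"
  proof -
    have "((X - g)\<^sup>2 - (X - b)\<^sup>2) / 2 = (b - g) * (2*X - g - b) / 2"
      by (simp add: power2_eq_square algebra_simps)
    moreover have "(b - g) * (2*X - g - b) / 2 - (b - g) * (X - b) = (b - g)\<^sup>2 / 2"
      by (simp add: power2_eq_square field_simps)
    moreover have "(b - g)\<^sup>2 / 2 \<ge> 0" by simp
    ultimately show ?thesis by linarith
  qed
  then show ?thesis using True assms by (simp add: max_def)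
next
  case False
  then show ?thesis by (simp add: max_def)
qed

lemma tele_sum:
  assumes apos: "\<And>k. k \<ge> 1 \<Longrightarrow> a k > 0" and X: "X \<ge> 0"
  shows "(\<Sum>k=1..K. (1 / a k) * max 0 (X - gam a k)) \<le> X\<^sup>2 / 2 - (max 0 (X - gam a K))\<^sup>2 / 2"
proof (induction K)
  case 0 then show ?case using X by (simp add: max_def)
next
  case (Suc K)
  have "gam a K \<le> gam a (Suc K)" using gam_mono[OF apos] by simp
  from tele_alg[OF this, of X]
  have h: "(1 / a (Suc K)) * max 0 (X - gam a (Suc K))
      \<le> ((max 0 (X - gam a K))\<^sup>2 - (max 0 (X - gam a (Suc K)))\<^sup>2) / 2"
    by (simp add: gam_Suc)
  have e: "(\<Sum>k=1..Suc K. (1 / a k) * max 0 (X - gam a k)) = (\<Sum>k=1..K. (1 / a k) * max 0 (X - gam a k)) + (1 / a (Suc K)) * max 0 (X - gam a (Suc K))"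
    by (simp add: sum.cl_ivl_Suc)
  show ?case unfolding e using Suc.IH h by argo
qed

lemma aux_lin: fixes n t m S :: real
  shows "c = t + m \<Longrightarrow> 0 \<le> m \<Longrightarrow> P \<Longrightarrow> Q \<Longrightarrow> n / 2 \<le> S \<Longrightarrow> R \<Longrightarrow> (n + 2 * t + m) / 2 \<le> S + (t + m)"
  by argo

lemma inner_Y_sum:
  fixes c :: "nat \<Rightarrow> 'y::real_inner"
  shows "(\<Sum>k=1..K. inner (c k) (\<Sum>i=1..k. c i)) \<ge> (norm (\<Sum>i=1..K. c i))\<^sup>2 / 2"
proof (induction K)
  case 0 then show ?case by simp
next
  case (Suc K)
  define Y where "Y = (\<Sum>i=1..K. c i)"
  have eq: "(norm (Y + c (Suc K)))\<^sup>2 = (norm Y)\<^sup>2 + 2 * inner Y (c (Suc K)) + (norm (c (Suc K)))\<^sup>2"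
    by (simp add: power2_norm_eq_inner inner_add_left inner_add_right inner_commute)
  have "inner (c (Suc K)) (Y + c (Suc K)) = inner Y (c (Suc K)) + (norm (c (Suc K)))\<^sup>2"
    by (simp add: power2_norm_eq_inner inner_add_right inner_commute)
  moreover have "(norm (c (Suc K)))\<^sup>2 \<ge> 0" by simp
  moreover have "(\<Sum>i=1..Suc K. c i) = Y + c (Suc K)" by (simp add: Y_def sum.cl_ivl_Suc)
  moreover have "(\<Sum>k=1..Suc K. inner (c k) (\<Sum>i=1..k. c i)) = (\<Sum>k=1..K. inner (c k) (\<Sum>i=1..k. c i)) + inner (c (Suc K)) (\<Sum>i=1..Suc K. c i)"
    by (simp add: sum.cl_ivl_Suc)
  moreover have "(\<Sum>k=1..K. inner (c k) (\<Sum>i=1..k. c i)) \<ge> (norm Y)\<^sup>2 / 2" using Suc.IH by (simp add: Y_def)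
  ultimately show ?case using eq by (simp only:) (rule aux_lin)
qed

lemma abstract_est:
  fixes Tu Su :: "nat \<Rightarrow> 'y::real_inner" and Tud Sud z w :: 'y
    and a Ek q :: "nat \<Rightarrow> real"
  assumes apos: "\<And>k. k \<ge> 1 \<Longrightarrow> a k > 0"
    and dT: "\<And>k. k \<in> {1..K} \<Longrightarrow> norm (Tu k - Su k) \<le> \<delta>"
    and dTd: "norm (Tud - Sud) \<le> \<delta>"
    and Mb: "\<And>k. k \<in> {1..K} \<Longrightarrow> norm (Su k - Sud) \<le> Mb"
    and qdef: "\<And>k. k \<in> {1..K} \<Longrightarrow> q k = - inner (Su k - Sud) (z - Sud)"
    and qnn: "\<And>k. k \<in> {1..K} \<Longrightarrow> 0 \<le> q k"
    and qle: "\<And>k. k \<in> {1..K} \<Longrightarrow> q k \<le> Qz" and Qz: "Qz \<ge> 0" and X: "X \<ge> 0"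
    and Ek: "\<And>k. k \<in> {1..K} \<Longrightarrow> Ek k \<le> (\<Sum>i=1..k. (1 / a i) * inner (Tu k - Tud) (z - Tu i))
              - inner (Su k - Sud) w + Ce + X * q k"
  shows "(\<Sum>k=1..K. (1 / a k) * Ek k) \<le> (gam a K)\<^sup>2 * (\<delta> * (2 * norm (z - Sud) + 2 * \<delta> + Mb))
           + Qz * X\<^sup>2 / 2 + (norm w)\<^sup>2 / 2 + gam a K * (2 * \<delta> * norm w + Ce)"
proof -
  have d0: "0 \<le> \<delta>" using dTd norm_ge_zero[of "Tud - Sud"] by linarith
  define y where "y k = Tu k - Tud" for k
  define s where "s k = Su k - Sud" for k
  define c where "c k = (1 / a k) *\<^sub>R y k" for k
  define Y where "Y k = (\<Sum>i=1..k. c i)" for k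
  define E where "E = \<delta> * (2 * norm (z - Sud) + 2 * \<delta> + Mb)"
  have E0: "E \<ge> 0" if "K \<ge> 1"
  proof -
    have "norm (Su 1 - Sud) \<le> Mb" using Mb[of 1] that by simp
    then have "Mb \<ge> 0" using norm_ge_zero[of "Su 1 - Sud"] by linarith
    then show ?thesis unfolding E_def using d0 by simp
  qed
  have step: "(1 / a k) * Ek k \<le> (1 / a k) * (gam a k * E) + (1 / a k) * ((X - gam a k) * q k)
       - inner (c k) (Y k) - inner (c k) w + (1 / a k) * (2 * \<delta> * norm w + Ce)"
    if k: "k \<in> {1..K}" for k
  proof -
    have ak: "a k > 0" using apos k by simp
    have g0: "gam a k \<ge> 0" using gam_nonneg[OF apos] .
    have s1: "(\<Sum>i=1..k. (1 / a i) * inner (Tu k - Tud) (z - Tu i))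
        = gam a k * inner (y k) (z - Tud) - inner (y k) (Y k)"
    proof -
      have "(\<Sum>i=1..k. (1 / a i) * inner (Tu k - Tud) (z - Tu i))
          = (\<Sum>i=1..k. (1 / a i) * inner (y k) (z - Tud) - inner (y k) (c i))"
        by (intro sum.cong refl) (simp add: y_def c_def inner_diff_right algebra_simps)
      also have "\<dots> = gam a k * inner (y k) (z - Tud) - inner (y k) (Y k)"
        by (simp add: sum_subtractf gam_def sum_distrib_right Y_def inner_sum_right)
      finally show ?thesis .
    qed
    have s2: "inner (y k) (z - Tud) \<le> - q k + E"
    proof -
      have "inner (y k) (z - Tud) - inner (s k) (z - Sud)
          = inner (y k - s k) (z - Tud) + inner (s k) (Sud - Tud)"
        by (simp add: inner_diff_left inner_diff_right algebra_simps)
      also have "\<dots> \<le> norm (y k - s k) * norm (z - Tud) + norm (s k) * norm (Sud - Tud)"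
        by (intro add_mono order_trans[OF abs_ge_self Cauchy_Schwarz_ineq2])
      also have "\<dots> \<le> (2 * \<delta>) * (norm (z - Sud) + \<delta>) + Mb * \<delta>"
      proof (intro add_mono mult_mono)
        have "y k - s k = (Tu k - Su k) - (Tud - Sud)" by (simp add: y_def s_def)
        then have "norm (y k - s k) \<le> norm (Tu k - Su k) + norm (Tud - Sud)"
          by (metis norm_triangle_ineq4)
        then show "norm (y k - s k) \<le> 2 * \<delta>" using dT[OF k] dTd by linarith
        have "z - Tud = (z - Sud) - (Tud - Sud)" by simp
        then have "norm (z - Tud) \<le> norm (z - Sud) + norm (Tud - Sud)"
          by (metis norm_triangle_ineq4)
        then show "norm (z - Tud) \<le> norm (z - Sud) + \<delta>" using dTd by linarith
        show "norm (s k) \<le> Mb" using Mb[OF k] by (simp add: s_def)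
        show "norm (Sud - Tud) \<le> \<delta>" using dTd by (simp add: norm_minus_commute)
      qed (use d0 order_trans[OF norm_ge_zero Mb[OF k]] in auto)
      also have "\<dots> = E" by (simp add: E_def algebra_simps)
      finally show ?thesis using qdef[OF k] by (simp add: s_def)
    qed
    have s3: "- inner (s k) w \<le> - inner (y k) w + 2 * \<delta> * norm w"
    proof -
      have "inner (y k) w - inner (s k) w = inner (y k - s k) w" by (simp add: inner_diff_left)
      also have "\<dots> \<le> norm (y k - s k) * norm w" by (rule order_trans[OF abs_ge_self Cauchy_Schwarz_ineq2])
      also have "\<dots> \<le> 2 * \<delta> * norm w"
      proof (rule mult_right_mono)
        have "y k - s k = (Tu k - Su k) - (Tud - Sud)" by (simp add: y_def s_def)
        then have "norm (y k - s k) \<le> norm (Tu k - Su k) + norm (Tud - Sud)"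
          by (metis norm_triangle_ineq4)
        then show "norm (y k - s k) \<le> 2 * \<delta>" using dT[OF k] dTd by linarith
      qed simp
      finally show ?thesis by linarith
    qed
    have "Ek k \<le> gam a k * inner (y k) (z - Tud) - inner (y k) (Y k) - inner (s k) w + Ce + X * q k"
      using Ek[OF k] s1 by (simp add: s_def)
    also have "\<dots> \<le> gam a k * (- q k + E) - inner (y k) (Y k) - inner (y k) w + 2 * \<delta> * norm w + Ce + X * q k"
      using mult_left_mono[OF s2 g0] s3 by linarith
    finally have "Ek k \<le> gam a k * E + (X - gam a k) * q k - inner (y k) (Y k) - inner (y k) w + (2 * \<delta> * norm w + Ce)"
      by (simp add: algebra_simps)
    then have "(1 / a k) * Ek k \<le> (1 / a k) * (gam a k * E + (X - gam a k) * q k - inner (y k) (Y k) - inner (y k) w + (2 * \<delta> * norm w + Ce))"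
      using ak by (intro mult_left_mono) auto
    then show ?thesis by (simp add: c_def algebra_simps)
  qed
  have "(\<Sum>k=1..K. (1 / a k) * Ek k) \<le> (\<Sum>k=1..K. (1 / a k) * (gam a k * E) + (1 / a k) * ((X - gam a k) * q k)
       - inner (c k) (Y k) - inner (c k) w + (1 / a k) * (2 * \<delta> * norm w + Ce))"
    by (intro sum_mono step)
  also have "\<dots> = (\<Sum>k=1..K. (1 / a k) * (gam a k * E)) + (\<Sum>k=1..K. (1 / a k) * ((X - gam a k) * q k))
       - (\<Sum>k=1..K. inner (c k) (Y k)) - inner (Y K) w + gam a K * (2 * \<delta> * norm w + Ce)"
    by (simp add: sum.distrib sum_subtractf Y_def inner_sum_left gam_def sum_distrib_right)
  also have "\<dots> \<le> (gam a K)\<^sup>2 * E + Qz * X\<^sup>2 / 2 + (norm w)\<^sup>2 / 2 + gam a K * (2 * \<delta> * norm w + Ce)"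
  proof -
    have A: "(\<Sum>k=1..K. (1 / a k) * (gam a k * E)) \<le> (gam a K)\<^sup>2 * E"
    proof (cases "K \<ge> 1")
      case True
      have "(\<Sum>k=1..K. (1 / a k) * (gam a k * E)) \<le> (\<Sum>k=1..K. (1 / a k) * (gam a K * E))"
      proof (intro sum_mono mult_left_mono mult_right_mono)
        fix k assume k: "k \<in> {1..K}"
        show "gam a k \<le> gam a K" using gam_mono[OF apos] k by simp
        show "0 \<le> E" using E0 True by simp
        show "0 \<le> 1 / a k" using apos[of k] k by simp
      qed
      also have "\<dots> = (\<Sum>k=1..K. 1 / a k) * (gam a K * E)" by (rule sum_distrib_right[symmetric])
      also have "\<dots> = (gam a K)\<^sup>2 * E" by (simp add: gam_def power2_eq_square mult.assoc)
      finally show ?thesis .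
    next
      case False then have "K = 0" by simp
      then show ?thesis by simp
    qed
    have B: "(\<Sum>k=1..K. (1 / a k) * ((X - gam a k) * q k)) \<le> Qz * X\<^sup>2 / 2"
    proof -
      have "(\<Sum>k=1..K. (1 / a k) * ((X - gam a k) * q k)) \<le> (\<Sum>k=1..K. Qz * ((1 / a k) * max 0 (X - gam a k)))"
      proof (intro sum_mono)
        fix k assume k: "k \<in> {1..K}"
        have ak: "0 \<le> 1 / a k" using apos[of k] k by simp
        have "(X - gam a k) * q k \<le> max 0 (X - gam a k) * q k"
          using qnn[OF k] by (simp add: mult_right_mono)
        also have "\<dots> \<le> max 0 (X - gam a k) * Qz"
          using qle[OF k] by (simp add: mult_left_mono)
        finally have "(1 / a k) * ((X - gam a k) * q k) \<le> (1 / a k) * (max 0 (X - gam a k) * Qz)"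
          by (rule mult_left_mono[OF _ ak])
        then show "(1 / a k) * ((X - gam a k) * q k) \<le> Qz * ((1 / a k) * max 0 (X - gam a k))"
          by (simp only: mult_ac)
      qed
      also have "\<dots> = Qz * (\<Sum>k=1..K. (1 / a k) * max 0 (X - gam a k))" by (simp add: sum_distrib_left)
      also have "\<dots> \<le> Qz * (X\<^sup>2 / 2)"
      proof (rule mult_left_mono[OF _ Qz])
        show "(\<Sum>k=1..K. (1 / a k) * max 0 (X - gam a k)) \<le> X\<^sup>2 / 2"
        proof -
          have "(\<Sum>k=1..K. (1 / a k) * max 0 (X - gam a k)) \<le> X\<^sup>2 / 2 - (max 0 (X - gam a K))\<^sup>2 / 2"
            by (rule tele_sum) (auto simp: apos X)
          then show ?thesis using zero_le_power2[of "max 0 (X - gam a K)"] by argo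
        qed
      qed
      finally show ?thesis by simp
    qed
    have C: "- (\<Sum>k=1..K. inner (c k) (Y k)) - inner (Y K) w \<le> (norm w)\<^sup>2 / 2"
    proof -
      have "(\<Sum>k=1..K. inner (c k) (Y k)) \<ge> (norm (Y K))\<^sup>2 / 2"
        unfolding Y_def by (rule inner_Y_sum)
      moreover have "0 \<le> (norm (Y K + w))\<^sup>2" by simp
      moreover have "(norm (Y K + w))\<^sup>2 = (norm (Y K))\<^sup>2 + 2 * inner (Y K) w + (norm w)\<^sup>2"
        by (simp add: power2_norm_eq_inner inner_add_left inner_add_right inner_commute)
      ultimately show ?thesis by linarith
    qed
    show ?thesis using A B C by linarith
  qed
  finally show ?thesis by (simp add: E_def)
qed

lemma gam_lower:
  assumes apos: "\<And>k. k \<ge> 1 \<Longrightarrow> a k > 0" and ab: "\<And>k. k \<ge> 1 \<Longrightarrow> a k \<le> Ma"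
  shows "real K / Ma \<le> gam a K"
proof (induction K)
  case 0 then show ?case by simp
next
  case (Suc K)
  have a1: "0 < a (Suc K)" "a (Suc K) \<le> Ma" using apos ab by auto
  have "1 / Ma \<le> 1 / a (Suc K)" by (rule frac_le) (use a1 in auto)
  moreover have "real (Suc K) / Ma = real K / Ma + 1 / Ma" by (simp add: add_divide_distrib)
  ultimately show ?case using Suc.IH by (simp add: gam_Suc)
qed

lemma choose_kh:
  fixes d :: "real \<Rightarrow> real" and G :: "nat \<Rightarrow> real"
  assumes d0: "\<And>h. h > 0 \<Longrightarrow> d h \<ge> 0" and dlim: "(d \<longlongrightarrow> 0) (at_right 0)"
    and G0: "\<And>K. G K \<ge> 0"
  shows "\<exists>kh::real\<Rightarrow>nat. filterlim kh at_top (at_right 0) \<and>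
           (\<forall>h>0. kh h = 0 \<or> G (kh h) * d h \<le> sqrt (d h))"
proof -
  define N where "N h = nat \<lfloor>1 / h\<rfloor>" for h :: real
  define A where "A h = {K. K \<le> N h \<and> G K * d h \<le> sqrt (d h)}" for h
  define kh where "kh h = Max (insert 0 (A h))" for h
  have fin: "finite (A h)" for h
    by (rule finite_subset[of _ "{..N h}"]) (auto simp: A_def)
  have mem: "kh h \<in> insert 0 (A h)" for h
    unfolding kh_def using fin by (intro Max_in) auto
  have P2: "\<forall>h>0. kh h = 0 \<or> G (kh h) * d h \<le> sqrt (d h)"
    using mem by (auto simp: A_def)
  have "filterlim kh at_top (at_right 0)"
    unfolding filterlim_at_top
  proof
    fix n :: nat
    have ev1: "eventually (\<lambda>h. n \<le> N h) (at_right (0::real))"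
      unfolding eventually_at_right_field
    proof (intro exI[of _ "1 / (real n + 1)"] conjI allI impI)
      show "0 < 1 / (real n + 1)" by simp
      fix h :: real assume h: "0 < h" "h < 1 / (real n + 1)"
      then have "real n + 1 < 1 / h" by (simp add: field_simps)
      then have "real n \<le> \<lfloor>1 / h\<rfloor>" by linarith
      then show "n \<le> N h" unfolding N_def by linarith
    qed
    have "((\<lambda>h. G n * sqrt (d h)) \<longlongrightarrow> G n * sqrt 0) (at_right 0)"
      by (intro tendsto_intros dlim)
    then have ev2: "eventually (\<lambda>h. G n * sqrt (d h) < 1) (at_right (0::real))"
      by (rule order_tendstoD) simp
    have ev3: "eventually (\<lambda>h::real. h > 0) (at_right 0)"
      by (simp add: eventually_at_right_less)
    show "eventually (\<lambda>h. n \<le> kh h) (at_right 0)"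
      using ev1 ev2 ev3
    proof eventually_elim
      case (elim h)
      have dh: "d h \<ge> 0" using d0[of h] elim by auto
      have sq: "sqrt (d h) * sqrt (d h) = d h" using dh by simp
      have "G n * d h = (G n * sqrt (d h)) * sqrt (d h)"
        by (simp only: mult.assoc sq)
      also have "\<dots> \<le> 1 * sqrt (d h)"
        using elim(2) dh by (intro mult_right_mono) auto
      finally have "n \<in> A h" using elim(1) by (simp add: A_def)
      then show ?case unfolding kh_def using fin by (intro Max_ge) auto
    qed
  qed
  then show ?thesis using P2 by blast
qed

lemma final_asm:
  fixes \<delta> :: "real \<Rightarrow> real" and \<alpha> :: "nat \<Rightarrow> real" and err :: "real \<Rightarrow> nat \<Rightarrow> real"
  assumes apos: "\<And>k. k \<ge> 1 \<Longrightarrow> \<alpha> k > 0" and abdd: "\<And>k. k \<ge> 1 \<Longrightarrow> \<alpha> k \<le> Ma"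
    and dnn: "\<And>h. h \<ge> 0 \<Longrightarrow> \<delta> h \<ge> 0" and dlim: "(\<delta> \<longlongrightarrow> 0) (at_right 0)"
    and dmono: "\<And>h. 0 < h \<Longrightarrow> h \<le> hmax \<Longrightarrow> \<delta> h \<le> \<delta> hmax"
    and hmax: "hmax > 0"
    and errnn: "\<And>h i. err h i \<ge> 0"
    and ca: "ca \<ge> 0" and cb: "cb \<ge> 0" and cc: "cc \<ge> 0" and P: "P \<ge> 0" and Q: "Q \<ge> 0"
    and kap: "\<kappa> > 0"
    and key: "\<And>\<epsilon> h K. \<epsilon> > 0 \<Longrightarrow> 0 < h \<Longrightarrow> h \<le> hmax \<Longrightarrow> K \<ge> 1 \<Longrightarrow>
      \<exists>i\<in>{1..K}. (err h i)\<^sup>2 \<le> ca * \<delta> h * gam \<alpha> K + (P / \<epsilon>\<^sup>2 + Q) / gam \<alpha> K + cb * \<delta> h + cc * \<epsilon> powr \<kappa>"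
  shows "\<exists>C::real. \<exists>kh :: real \<Rightarrow> nat.
           (\<forall>h. 0 < h \<and> h \<le> hmax \<longrightarrow> (\<Sum>i=1..kh h. Hterm \<delta> h \<alpha> i) \<le> C) \<and>
           filterlim kh at_top (at_right 0) \<and>
           ((\<lambda>h. Min ((\<lambda>i. err h i) ` {1..kh h})) \<longlongrightarrow> 0) (at_right 0)"
proof -
  have Ma: "Ma > 0" using apos[of 1] abdd[of 1] by simp
  define A where "A i = rho \<alpha> i / \<alpha> i + gam \<alpha> (i - 1) / \<alpha> i + gam \<alpha> (i - 1) * rho \<alpha> i / \<alpha> i" for i
  define B where "B i = (rho \<alpha> i)\<^sup>2 / (\<alpha> i)\<^sup>2 + (rho \<alpha> i)\<^sup>2 / \<alpha> i" for i
  have HA: "Hterm \<delta> h \<alpha> i = \<delta> h * A i + (\<delta> h)\<^sup>2 * B i" for h i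
    by (simp add: Hterm_def A_def B_def)
  have rho0: "rho \<alpha> i \<ge> 0" if "i \<ge> 1" for i
    using apos[OF that] unfolding rho_def by (intro real_sqrt_ge_zero) simp
  have A0: "A i \<ge> 0" if "i \<ge> 1" for i
    using apos[OF that] rho0[OF that] gam_nonneg[where a=\<alpha> and K="i - 1", OF apos] unfolding A_def by simp
  have B0: "B i \<ge> 0" if "i \<ge> 1" for i
    using apos[OF that] unfolding B_def by simp
  define G where "G K = (\<Sum>i=1..K. A i + B i) + gam \<alpha> K" for K
  have G0: "G K \<ge> 0" for K
    unfolding G_def using A0 B0 gam_nonneg[where a=\<alpha> and K=K, OF apos] by (intro add_nonneg_nonneg sum_nonneg) auto
  define d where "d h = \<delta> h + (\<delta> h)\<^sup>2" for h
  have d0: "d h \<ge> 0" if "h > 0" for h using dnn[of h] that by (simp add: d_def)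
  have dlim': "(d \<longlongrightarrow> 0) (at_right 0)"
  proof -
    have "((\<lambda>h. \<delta> h + (\<delta> h)\<^sup>2) \<longlongrightarrow> 0 + 0\<^sup>2) (at_right 0)"
      by (intro tendsto_intros dlim)
    then show ?thesis by (simp add: d_def[abs_def])
  qed
  have ex: "\<exists>kh::real\<Rightarrow>nat. filterlim kh at_top (at_right 0) \<and>
           (\<forall>h>0. kh h = 0 \<or> G (kh h) * d h \<le> sqrt (d h))"
    by (rule choose_kh[where d=d and G=G]) (auto intro: d0 dlim' G0)
  obtain kh where khlim: "filterlim kh at_top (at_right 0)"
    and khG: "\<forall>h>0. kh h = 0 \<or> G (kh h) * d h \<le> sqrt (d h)"
    using ex by blast
  have sumH: "(\<Sum>i=1..K. Hterm \<delta> h \<alpha> i) \<le> G K * d h" if h: "h \<ge> 0" for K h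
  proof -
    have dh: "\<delta> h \<ge> 0" using dnn h by simp
    have SA: "(\<Sum>i=1..K. A i) \<ge> 0" "(\<Sum>i=1..K. B i) \<ge> 0" using A0 B0 by (auto intro: sum_nonneg)
    have "(\<Sum>i=1..K. Hterm \<delta> h \<alpha> i) = \<delta> h * (\<Sum>i=1..K. A i) + (\<delta> h)\<^sup>2 * (\<Sum>i=1..K. B i)"
      by (simp add: HA sum.distrib sum_distrib_left)
    also have "\<dots> \<le> ((\<Sum>i=1..K. A i) + (\<Sum>i=1..K. B i)) * d h"
    proof -
      have "0 \<le> (\<delta> h)\<^sup>2 * (\<Sum>i=1..K. A i)" "0 \<le> \<delta> h * (\<Sum>i=1..K. B i)"
        using SA dh by auto
      then show ?thesis by (simp add: d_def algebra_simps)
    qed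
    also have "\<dots> \<le> G K * d h"
      using gam_nonneg[where a=\<alpha> and K=K, OF apos] d0[of h] dh
      by (intro mult_right_mono) (auto simp: G_def sum.distrib d_def)
    finally show ?thesis .
  qed
  define C where "C = sqrt (d hmax)"
  have part1: "\<forall>h. 0 < h \<and> h \<le> hmax \<longrightarrow> (\<Sum>i=1..kh h. Hterm \<delta> h \<alpha> i) \<le> C"
  proof (intro allI impI)
    fix h assume h: "0 < h \<and> h \<le> hmax"
    have dd: "d h \<le> d hmax"
    proof -
      have "0 \<le> \<delta> h" "\<delta> h \<le> \<delta> hmax" using dnn dmono h by auto
      then have "(\<delta> h)\<^sup>2 \<le> (\<delta> hmax)\<^sup>2" by (intro power_mono) auto
      then show ?thesis using \<open>\<delta> h \<le> \<delta> hmax\<close> by (simp add: d_def)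
    qed
    show "(\<Sum>i=1..kh h. Hterm \<delta> h \<alpha> i) \<le> C"
    proof (cases "kh h = 0")
      case True then show ?thesis using d0[of hmax] hmax by (simp add: C_def)
    next
      case False
      then have "G (kh h) * d h \<le> sqrt (d h)" using khG h by auto
      also have "\<dots> \<le> C" unfolding C_def using dd by simp
      finally show ?thesis using sumH[of h "kh h"] h by simp
    qed
  qed
  have part3: "((\<lambda>h. Min ((\<lambda>i. err h i) ` {1..kh h})) \<longlongrightarrow> 0) (at_right 0)"
  proof (rule tendstoI)
    fix \<eta> :: real assume \<eta>: "\<eta> > 0"
    define t where "t = \<eta>\<^sup>2 / (4 * (cc + 1))"
    have t0: "t > 0" unfolding t_def using \<eta> cc by simp
    define \<epsilon> where "\<epsilon> = t powr (1 / \<kappa>)"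
    have \<epsilon>0: "\<epsilon> > 0" unfolding \<epsilon>_def using t0 by simp
    have \<epsilon>k: "\<epsilon> powr \<kappa> = t" unfolding \<epsilon>_def using t0 kap by (simp add: powr_powr)
    have c3t: "cc * \<epsilon> powr \<kappa> \<le> \<eta>\<^sup>2 / 4"
    proof -
      have "cc * t = (cc / (cc + 1)) * (\<eta>\<^sup>2 / 4)" unfolding t_def using cc by (simp add: field_simps)
      also have "\<dots> \<le> 1 * (\<eta>\<^sup>2 / 4)" using cc by (intro mult_right_mono) auto
      finally show ?thesis using \<epsilon>k by simp
    qed
    define W where "W = P / \<epsilon>\<^sup>2 + Q"
    have W0: "W \<ge> 0" unfolding W_def using P Q by simp
    define K0 where "K0 = nat \<lceil>Ma * (4 * W / \<eta>\<^sup>2)\<rceil> + 1"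
    have K0: "Ma * (4 * W / \<eta>\<^sup>2) \<le> real K0" unfolding K0_def by linarith
    have ev1: "eventually (\<lambda>h. K0 \<le> kh h) (at_right 0)"
      using khlim unfolding filterlim_at_top by blast
    have "((\<lambda>h. ca * sqrt (d h)) \<longlongrightarrow> ca * sqrt 0) (at_right 0)" by (intro tendsto_intros dlim')
    then have ev2: "eventually (\<lambda>h. ca * sqrt (d h) < \<eta>\<^sup>2 / 4) (at_right 0)"
      by (rule order_tendstoD) (use \<eta> in simp)
    have "((\<lambda>h. cb * \<delta> h) \<longlongrightarrow> cb * 0) (at_right 0)" by (intro tendsto_intros dlim)
    then have ev3: "eventually (\<lambda>h. cb * \<delta> h < \<eta>\<^sup>2 / 4) (at_right 0)"
      by (rule order_tendstoD) (use \<eta> in simp)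
    have ev4: "eventually (\<lambda>h. 0 < h \<and> h \<le> hmax) (at_right (0::real))"
      unfolding eventually_at_right_field using hmax by (intro exI[of _ hmax]) auto
    show "eventually (\<lambda>h. dist (Min ((\<lambda>i. err h i) ` {1..kh h})) 0 < \<eta>) (at_right 0)"
      using ev1 ev2 ev3 ev4
    proof eventually_elim
      case (elim h)
      define K where "K = kh h"
      have K1: "K \<ge> 1" "K \<ge> K0" using elim(1) unfolding K_def K0_def by auto
      have hh: "0 < h" "h \<le> hmax" using elim(4) by auto
      have dh: "\<delta> h \<ge> 0" using dnn hh by simp
      obtain i where i: "i \<in> {1..K}"
        and ei: "(err h i)\<^sup>2 \<le> ca * \<delta> h * gam \<alpha> K + W / gam \<alpha> K + cb * \<delta> h + cc * \<epsilon> powr \<kappa>"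
        using key[OF \<epsilon>0 hh K1(1)] unfolding W_def by blast
      have gK: "real K / Ma \<le> gam \<alpha> K" by (rule gam_lower[where a=\<alpha> and Ma=Ma and K=K, OF apos abdd])
      have gK0: "4 * W / \<eta>\<^sup>2 \<le> real K / Ma"
      proof -
        have "Ma * (4 * W / \<eta>\<^sup>2) \<le> real K" using K0 K1 by linarith
        then show ?thesis using Ma by (simp add: field_simps)
      qed
      have gpos: "gam \<alpha> K > 0"
      proof -
        have "real K / Ma > 0" using K1 Ma by simp
        then show ?thesis using gK by linarith
      qed
      have T1: "ca * \<delta> h * gam \<alpha> K < \<eta>\<^sup>2 / 4"
      proof -
        have "G K * d h \<le> sqrt (d h)" using khG hh K1 unfolding K_def by auto
        moreover have "\<delta> h * gam \<alpha> K \<le> d h * G K"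
        proof (intro mult_mono)
          show "\<delta> h \<le> d h" by (simp add: d_def)
          have "0 \<le> (\<Sum>i=1..K. A i + B i)" using A0 B0 by (intro sum_nonneg add_nonneg_nonneg) auto
          then show "gam \<alpha> K \<le> G K" unfolding G_def by simp
        qed (use dh gam_nonneg[where a=\<alpha> and K=K, OF apos] d0[OF hh(1)] in auto)
        ultimately have "\<delta> h * gam \<alpha> K \<le> sqrt (d h)" by (simp add: mult.commute)
        then have "ca * (\<delta> h * gam \<alpha> K) \<le> ca * sqrt (d h)" using ca by (rule mult_left_mono)
        then show ?thesis using elim(2) by (simp add: mult.assoc)
      qed
      have T2: "W / gam \<alpha> K \<le> \<eta>\<^sup>2 / 4"
      proof -
        have "4 * W / \<eta>\<^sup>2 \<le> gam \<alpha> K" using gK gK0 by linarith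
        then have "4 * W \<le> gam \<alpha> K * \<eta>\<^sup>2" using \<eta> by (simp add: field_simps)
        then show ?thesis using gpos by (simp add: field_simps)
      qed
      have "(err h i)\<^sup>2 < \<eta>\<^sup>2" using ei T1 T2 elim(3) c3t by argo
      then have erri: "err h i < \<eta>" using errnn[of h i] \<eta> by (simp add: power_less_imp_less_base)
      have finI: "finite ((\<lambda>i. err h i) ` {1..K})" by simp
      have neI: "(\<lambda>i. err h i) ` {1..K} \<noteq> {}" using i by auto
      have "Min ((\<lambda>i. err h i) ` {1..K}) \<le> err h i" using finI i by (intro Min_le) auto
      moreover have "Min ((\<lambda>i. err h i) ` {1..K}) \<ge> 0"
        using Min_in[OF finI neI] errnn by auto
      ultimately show ?case using erri unfolding K_def by (simp add: dist_real_def)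
    qed
  qed
  show ?thesis using part1 khlim part3 by blast
qed

lemma absmul_le: fixes a b :: real shows "\<bar>a * b\<bar> \<le> a\<^sup>2 + b\<^sup>2"
proof -
  have "0 \<le> (\<bar>a\<bar> - \<bar>b\<bar>)\<^sup>2" by simp
  then have h: "2*(\<bar>a\<bar>*\<bar>b\<bar>) \<le> \<bar>a\<bar>\<^sup>2 + \<bar>b\<bar>\<^sup>2" by (simp add: power2_eq_square algebra_simps)
  have "\<bar>a*b\<bar> = \<bar>a\<bar>*\<bar>b\<bar>" by (rule abs_mult)
  moreover have "0 \<le> \<bar>a\<bar>*\<bar>b\<bar>" by simp
  moreover have "\<bar>a\<bar>\<^sup>2 = a\<^sup>2" "\<bar>b\<bar>\<^sup>2 = b\<^sup>2" by simp_all
  ultimately show ?thesis using h by linarith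
qed
lemma sqsum_le: fixes a b x y :: real shows "(a * x + b * y)\<^sup>2 \<le> 2*a\<^sup>2*x\<^sup>2 + 2*b\<^sup>2*y\<^sup>2"
proof -
  have "0 \<le> (a*x - b*y)\<^sup>2" by simp
  then show ?thesis by (simp add: power2_eq_square algebra_simps)
qed

lemma sq_le_abs: fixes x y :: real shows "x\<^sup>2 \<le> y\<^sup>2 \<longleftrightarrow> \<bar>x\<bar> \<le> \<bar>y\<bar>"
  by (simp add: abs_le_square_iff)

lemma P1a:
  fixes a b q v :: real
  assumes "a \<le> b" "a \<le> q" "q \<le> b"
  shows "(v - max a (min b v))\<^sup>2 \<le> (v - q)\<^sup>2"
  unfolding sq_le_abs using assms by (auto simp: max_def min_def abs_if)

lemma P1b:
  fixes a b q v :: real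
  assumes "a \<le> b" "a \<le> q" "q \<le> b" "(v - q)\<^sup>2 = (v - max a (min b v))\<^sup>2"
  shows "q = max a (min b v)"
proof -
  have "\<bar>v - q\<bar> = \<bar>v - max a (min b v)\<bar>"
    using assms(4) sq_le_abs[of "v - q" "v - max a (min b v)"] sq_le_abs[of "v - max a (min b v)" "v - q"]
    by simp
  then show ?thesis using assms(1-3) by (auto simp: max_def min_def abs_if split: if_splits)
qed

lemma P2:
  fixes a b w l :: real
  assumes "a \<le> b" "a \<le> w" "w \<le> b"
  shows "(l - max a (min b l)) * (w - max a (min b l)) \<le> 0"
  using assms by (auto simp: max_def min_def mult_le_0_iff)

lemma P3pre:
  fixes a b ud p :: real
  assumes "a \<le> ud" "ud \<le> b"
  shows "0 \<le> (max a (min b (ud + p)) - ud) * p"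
  using assms by (auto simp: max_def min_def zero_le_mult_iff)

lemma P3:
  fixes a b ud p v :: real
  assumes "a \<le> ud" "ud \<le> b" "(max a (min b (ud + p)) - ud) * p = 0" "a \<le> v" "v \<le> b"
  shows "p * (v - ud) \<le> 0"
proof (cases "p = 0")
  case True then show ?thesis by simp
next
  case False
  then have eq: "max a (min b (ud + p)) = ud" using assms(3) by simp
  show ?thesis
  proof (cases "p > 0")
    case True
    then have "ud = b" using eq assms(1,2) by (auto simp: max_def min_def split: if_splits)
    then show ?thesis using True assms(5) by (simp add: mult_le_0_iff)
  next
    case False
    then have "p < 0" using \<open>p \<noteq> 0\<close> by simp
    then have "ud = a" using eq assms(1,2) by (auto simp: max_def min_def split: if_splits)
    then show ?thesis using \<open>p < 0\<close> assms(4) by (simp add: mult_le_0_iff)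
  qed
qed

lemma P4:
  fixes a b ud uk l sw pp R B \<epsilon> ind :: real and xI :: bool
  assumes ab: "a \<le> b" and ud: "a \<le> ud" "ud \<le> b" and uk: "a \<le> uk" "uk \<le> b"
    and ukc: "uk = max a (min b l)" and eB: "\<bar>uk - ud\<bar> \<le> B"
    and pe: "pp * (uk - ud) \<le> 0"
    and inI: "xI \<Longrightarrow> ud = max a (min b sw)"
    and notI: "\<not> xI \<Longrightarrow> pp \<noteq> 0"
    and swR: "\<bar>sw - ud\<bar> \<le> R" and eps: "\<epsilon> > 0"
    and ind: "ind = (if \<not> xI \<and> 0 < \<bar>pp\<bar> \<and> \<bar>pp\<bar> < \<epsilon> then 1 else 0)"
  shows "(uk - ud)\<^sup>2 \<le> l * (uk - ud) - sw * (uk - ud) + (R * B) * ind - (R / \<epsilon>) * (pp * (uk - ud))"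
proof -
  define e where "e = uk - ud"
  have h1: "(l - uk) * (ud - uk) \<le> 0" using P2[OF ab ud, of l] ukc by simp
  have h2: "e\<^sup>2 \<le> (l - ud) * e"
  proof -
    have "(l - ud) * e = (l - uk) * e + e\<^sup>2" by (simp add: e_def power2_eq_square algebra_simps)
    moreover have "(l - uk) * e = - ((l - uk) * (ud - uk))" by (simp add: e_def algebra_simps)
    ultimately show ?thesis using h1 by linarith
  qed
  have B0: "B \<ge> 0" using eB by linarith
  have R0: "R \<ge> 0" using swR by linarith
  have ind0: "ind \<ge> 0" using ind by simp
  have pe0: "0 \<le> (- (pp * e)) / \<epsilon>" using pe eps by (simp add: e_def divide_nonpos_pos)
  have Tnn: "0 \<le> R * (B * ind + (- (pp * e)) / \<epsilon>)"
    using R0 B0 ind0 pe0 by (intro mult_nonneg_nonneg add_nonneg_nonneg) auto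
  have h3: "- ud * e \<le> - sw * e + R * (B * ind + (- (pp * e)) / \<epsilon>)"
  proof (cases xI)
    case True
    have "(sw - ud) * (uk - ud) \<le> 0" using P2[OF ab uk, of sw] inI[OF True] by simp
    then have "- ud * e \<le> - sw * e" by (simp add: e_def algebra_simps)
    then show ?thesis using Tnn by linarith
  next
    case False
    have absE: "\<bar>e\<bar> \<le> B * ind + (- (pp * e)) / \<epsilon>"
    proof (cases "\<bar>pp\<bar> < \<epsilon>")
      case True
      then have "ind = 1" using ind False notI[OF False] by simp
      then show ?thesis using eB pe0 by (simp add: e_def)
    next
      case False2: False
      then have "ind = 0" using ind by auto
      have "- (pp * e) = \<bar>pp * e\<bar>" using pe by (simp add: e_def abs_of_nonpos)
      also have "\<dots> = \<bar>pp\<bar> * \<bar>e\<bar>" by (rule abs_mult)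
      finally have "- (pp * e) = \<bar>pp\<bar> * \<bar>e\<bar>" .
      moreover have "\<epsilon> * \<bar>e\<bar> \<le> \<bar>pp\<bar> * \<bar>e\<bar>" using False2 by (intro mult_right_mono) auto
      ultimately have "\<bar>e\<bar> \<le> (- (pp * e)) / \<epsilon>" using eps by (simp add: field_simps)
      then show ?thesis using \<open>ind = 0\<close> by simp
    qed
    have "(sw - ud) * e \<le> \<bar>sw - ud\<bar> * \<bar>e\<bar>" by (metis abs_ge_self abs_mult)
    also have "\<dots> \<le> R * \<bar>e\<bar>" using swR by (intro mult_right_mono) auto
    also have "\<dots> \<le> R * (B * ind + (- (pp * e)) / \<epsilon>)" using absE R0 by (intro mult_left_mono) auto
    finally have "(sw - ud) * e \<le> R * (B * ind + (- (pp * e)) / \<epsilon>)" .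
    then show ?thesis by (simp add: algebra_simps)
  qed
  have "(uk - ud)\<^sup>2 = e\<^sup>2" by (simp add: e_def)
  also have "\<dots> \<le> l * e - ud * e" using h2 by (simp add: algebra_simps)
  also have "\<dots> \<le> l * e - sw * e + R * (B * ind + (- (pp * e)) / \<epsilon>)" using h3 by linarith
  also have "\<dots> = l * e - sw * e + (R * B) * ind - (R / \<epsilon>) * (pp * e)"
    using eps by (simp add: field_simps)
  finally show ?thesis by (simp add: e_def)
qed

lemma Pconv1:
  fixes a x y t :: real
  assumes "a \<le> x" "a \<le> y" "0 \<le> t" "t \<le> 1"
  shows "a \<le> (1 - t) * x + t * y"
proof -
  have "(1 - t) * a \<le> (1 - t) * x" using assms by (intro mult_left_mono) auto
  moreover have "t * a \<le> t * y" using assms by (intro mult_left_mono) auto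
  moreover have "(1 - t) * a = a - t * a" by (simp add: left_diff_distrib)
  ultimately show ?thesis by linarith
qed

lemma Pconv2:
  fixes b x y t :: real
  assumes "x \<le> b" "y \<le> b" "0 \<le> t" "t \<le> 1"
  shows "(1 - t) * x + t * y \<le> b"
proof -
  have "(1 - t) * x \<le> (1 - t) * b" using assms by (intro mult_left_mono) auto
  moreover have "t * y \<le> t * b" using assms by (intro mult_left_mono) auto
  moreover have "(1 - t) * b = b - t * b" by (simp add: left_diff_distrib)
  ultimately show ?thesis by linarith
qed

locale cor47 =
  fixes \<Omega> :: "'a::euclidean_space set"
    and S :: "('a \<Rightarrow> real) \<Rightarrow> 'y::{real_inner, complete_space}"
    and Sadj :: "'y \<Rightarrow> 'a \<Rightarrow> real"
    and Sh :: "real \<Rightarrow> ('a \<Rightarrow> real) \<Rightarrow> 'y"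
    and Shadj :: "real \<Rightarrow> 'y \<Rightarrow> 'a \<Rightarrow> real"
    and z :: 'y
    and ua ub udag :: "'a \<Rightarrow> real"
    and \<delta> :: "real \<Rightarrow> real"
    and \<alpha> :: "nat \<Rightarrow> real"
    and hmax :: real
    and u :: "real \<Rightarrow> nat \<Rightarrow> 'a \<Rightarrow> real"
  assumes \<Omega>_bounded: "bounded \<Omega>" and \<Omega>_meas: "\<Omega> \<in> sets lebesgue"
    and S_lin: "bounded_linear_L2 \<Omega> S" and S_adj: "is_adjoint \<Omega> S Sadj"
    and ua: "Linfty \<Omega> ua" and ub: "Linfty \<Omega> ub"
    and ua_ub: "AE x in lebesgue_on \<Omega>. ua x \<le> ub x"
    and Sh_lin: "\<And>h. h \<ge> 0 \<Longrightarrow> bounded_linear_L2 \<Omega> (Sh h)"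
    and Sh_adj: "\<And>h. h \<ge> 0 \<Longrightarrow> is_adjoint \<Omega> (Sh h) (Shadj h)"
    and \<delta>_nonneg: "\<And>h. h \<ge> 0 \<Longrightarrow> \<delta> h \<ge> 0"
    and \<delta>_bound: "\<And>h v. h \<ge> 0 \<Longrightarrow> v \<in> Uad \<Omega> ua ub \<Longrightarrow>
         norm (S v - Sh h v)
         + L2norm \<Omega> (\<lambda>x. Sadj (Sh h v - z) x - Shadj h (Sh h v - z) x) \<le> \<delta> h"
    and \<alpha>_pos: "\<And>k. k \<ge> 1 \<Longrightarrow> \<alpha> k > 0"
    and udag_mem: "udag \<in> Uad \<Omega> ua ub"
    and udag_min: "\<And>v. v \<in> Uad \<Omega> ua ub \<Longrightarrow> (norm (S udag - z))\<^sup>2 / 2 \<le> (norm (S v - z))\<^sup>2 / 2"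
    and u_step: "\<And>h k. 0 < h \<Longrightarrow> h \<le> hmax \<Longrightarrow> k \<ge> 1 \<Longrightarrow>
         u h k \<in> Uad \<Omega> ua ub \<and>
         bregman_B \<Omega> ua ub (Sh h) (Shadj h) z (\<alpha> k)
           (bregman_lambda (Sh h) (Shadj h) z \<alpha> (u h) (k - 1)) (u h k) \<le> 0"
begin

abbreviation "MM \<equiv> lebesgue_on \<Omega>"
abbreviation "UU \<equiv> Uad \<Omega> ua ub"

lemma space_MM[simp]: "space MM = \<Omega>" by simp

lemma fin: "finite_measure MM"
  using finite_measure_lebesgue_on bounded_set_imp_lmeasurable \<Omega>_bounded \<Omega>_meas by blast

lemma int_const: "integrable MM (\<lambda>x. c::real)"
  using fin finite_measure.integrable_const by blast

lemma L2D: "f \<in> L2 \<Omega> \<Longrightarrow> f \<in> borel_measurable MM" "f \<in> L2 \<Omega> \<Longrightarrow> integrable MM (\<lambda>x. (f x)\<^sup>2)"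
  by (auto simp: L2_def)

lemma L2_mult_int:
  assumes "f \<in> L2 \<Omega>" "g \<in> L2 \<Omega>"
  shows "integrable MM (\<lambda>x. f x * g x)"
proof (rule Bochner_Integration.integrable_bound[where f="\<lambda>x. (f x)\<^sup>2 + (g x)\<^sup>2"])
  show "integrable MM (\<lambda>x. (f x)\<^sup>2 + (g x)\<^sup>2)" using assms L2D by auto
  show "(\<lambda>x. f x * g x) \<in> borel_measurable MM" using assms L2D by measurable
  show "AE x in MM. norm (f x * g x) \<le> norm ((f x)\<^sup>2 + (g x)\<^sup>2)"
    by (rule AE_I2) (simp add: absmul_le)
qed

lemma L2_lin:
  assumes "f \<in> L2 \<Omega>" "g \<in> L2 \<Omega>"
  shows "(\<lambda>x. a * f x + b * g x) \<in> L2 \<Omega>"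
proof -
  have m: "(\<lambda>x. a * f x + b * g x) \<in> borel_measurable MM" using assms L2D by measurable
  have "integrable MM (\<lambda>x. (a * f x + b * g x)\<^sup>2)"
  proof (rule Bochner_Integration.integrable_bound[where f="\<lambda>x. 2*a\<^sup>2*(f x)\<^sup>2 + 2*b\<^sup>2*(g x)\<^sup>2"])
    show "integrable MM (\<lambda>x. 2*a\<^sup>2*(f x)\<^sup>2 + 2*b\<^sup>2*(g x)\<^sup>2)" using assms L2D by auto
    show "(\<lambda>x. (a * f x + b * g x)\<^sup>2) \<in> borel_measurable MM" using m by measurable
    show "AE x in MM. norm ((a * f x + b * g x)\<^sup>2) \<le> norm (2*a\<^sup>2*(f x)\<^sup>2 + 2*b\<^sup>2*(g x)\<^sup>2)"
      by (rule AE_I2) (simp add: sqsum_le)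
  qed
  then show ?thesis using m by (simp add: L2_def)
qed

lemma L2_bdd:
  assumes "f \<in> borel_measurable MM" "AE x in MM. \<bar>f x\<bar> \<le> B"
  shows "f \<in> L2 \<Omega>"
proof -
  have "integrable MM (\<lambda>x. (f x)\<^sup>2)"
  proof (rule Bochner_Integration.integrable_bound[where f="\<lambda>x. B\<^sup>2"])
    show "integrable MM (\<lambda>x. B\<^sup>2)" by (rule int_const)
    show "(\<lambda>x. (f x)\<^sup>2) \<in> borel_measurable MM" using assms by measurable
    show "AE x in MM. norm ((f x)\<^sup>2) \<le> norm (B\<^sup>2)"
      using assms(2) by eventually_elim (simp add: abs_le_square_iff[symmetric])
  qed
  then show ?thesis using assms by (simp add: L2_def)
qed

lemma L2_diff:
  assumes "f \<in> L2 \<Omega>" "g \<in> L2 \<Omega>" shows "(\<lambda>x. f x - g x) \<in> L2 \<Omega>"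
  using L2_lin[OF assms, of 1 "-1"] by simp

lemma L2_sum:
  assumes "finite I" "\<And>i. i \<in> I \<Longrightarrow> f i \<in> L2 \<Omega>"
  shows "(\<lambda>x. \<Sum>i\<in>I. c i * f i x) \<in> L2 \<Omega>"
  using assms
proof (induction I rule: finite_induct)
  case empty
  show ?case using L2_bdd[of "\<lambda>x. 0" 0] by simp
next
  case (insert j I)
  have "(\<lambda>x. c j * f j x + 1 * (\<Sum>i\<in>I. c i * f i x)) \<in> L2 \<Omega>"
    using insert by (intro L2_lin) auto
  then show ?case using insert by simp
qed

lemma L2inner_sum:
  assumes "finite I" "\<And>i. i \<in> I \<Longrightarrow> f i \<in> L2 \<Omega>" "g \<in> L2 \<Omega>"
  shows "L2inner \<Omega> (\<lambda>x. \<Sum>i\<in>I. c i * f i x) g = (\<Sum>i\<in>I. c i * L2inner \<Omega> (f i) g)"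
proof -
  have "L2inner \<Omega> (\<lambda>x. \<Sum>i\<in>I. c i * f i x) g = integral\<^sup>L MM (\<lambda>x. \<Sum>i\<in>I. c i * (f i x * g x))"
    unfolding L2inner_def by (simp add: sum_distrib_right mult.assoc)
  also have "\<dots> = (\<Sum>i\<in>I. integral\<^sup>L MM (\<lambda>x. c i * (f i x * g x)))"
    by (rule Bochner_Integration.integral_sum[where f="\<lambda>i x. c i * (f i x * g x)"]) (use assms L2_mult_int in auto)
  also have "\<dots> = (\<Sum>i\<in>I. c i * L2inner \<Omega> (f i) g)" by (simp add: L2inner_def)
  finally show ?thesis .
qed

lemma L2inner_comm: "L2inner \<Omega> f g = L2inner \<Omega> g f"
  by (simp add: L2inner_def mult.commute)

lemma L2inner_nonneg: "0 \<le> L2inner \<Omega> f f"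
  unfolding L2inner_def by (intro integral_nonneg_AE AE_I2) simp

lemma L2norm_nonneg: "0 \<le> L2norm \<Omega> f"
  unfolding L2norm_def using L2inner_nonneg by simp

lemma L2norm_sq: "(L2norm \<Omega> f)\<^sup>2 = L2inner \<Omega> f f"
  unfolding L2norm_def using L2inner_nonneg by simp

lemma ua_meas: "ua \<in> borel_measurable MM" and ub_meas: "ub \<in> borel_measurable MM"
  using ua ub by (auto simp: Linfty_def)

definition BU where
  "BU = (SOME B. B \<ge> 0 \<and> (AE x in MM. \<bar>ua x\<bar> \<le> B) \<and> (AE x in MM. \<bar>ub x\<bar> \<le> B))"

lemma BU: "BU \<ge> 0 \<and> (AE x in MM. \<bar>ua x\<bar> \<le> BU) \<and> (AE x in MM. \<bar>ub x\<bar> \<le> BU)"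
proof -
  obtain Ba where Ba: "AE x in MM. \<bar>ua x\<bar> \<le> Ba" using ua by (auto simp: Linfty_def)
  obtain Bb where Bb: "AE x in MM. \<bar>ub x\<bar> \<le> Bb" using ub by (auto simp: Linfty_def)
  have "AE x in MM. \<bar>ua x\<bar> \<le> \<bar>Ba\<bar> + \<bar>Bb\<bar>" using Ba by eventually_elim auto
  moreover have "AE x in MM. \<bar>ub x\<bar> \<le> \<bar>Ba\<bar> + \<bar>Bb\<bar>" using Bb by eventually_elim auto
  ultimately have "\<exists>B. B \<ge> 0 \<and> (AE x in MM. \<bar>ua x\<bar> \<le> B) \<and> (AE x in MM. \<bar>ub x\<bar> \<le> B)"
    by (intro exI[of _ "\<bar>Ba\<bar> + \<bar>Bb\<bar>"]) auto
  then show ?thesis unfolding BU_def by (rule someI_ex)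
qed

lemma BU0: "BU \<ge> 0" and BUa: "AE x in MM. \<bar>ua x\<bar> \<le> BU" and BUb: "AE x in MM. \<bar>ub x\<bar> \<le> BU"
  using BU by auto

lemma Uad_bdd:
  assumes "v \<in> UU"
  shows "AE x in MM. \<bar>v x\<bar> \<le> BU \<and> ua x \<le> v x \<and> v x \<le> ub x"
proof -
  have "AE x in MM. ua x \<le> v x \<and> v x \<le> ub x" using assms by (simp add: Uad_def)
  then show ?thesis using BUa BUb by eventually_elim auto
qed

lemma Uad_L2: "v \<in> UU \<Longrightarrow> v \<in> L2 \<Omega>" by (simp add: Uad_def)

definition clp where "clp v = (\<lambda>x. max (ua x) (min (ub x) (v x)))"

lemma clp_Uad:
  assumes v: "v \<in> borel_measurable MM"
  shows "clp v \<in> UU"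
proof -
  have m: "clp v \<in> borel_measurable MM" unfolding clp_def using v ua_meas ub_meas by measurable
  have "AE x in MM. \<bar>clp v x\<bar> \<le> BU" using BUa BUb ua_ub by eventually_elim (auto simp: clp_def)
  then have "clp v \<in> L2 \<Omega>" by (rule L2_bdd[OF m])
  moreover have "AE x in MM. ua x \<le> clp v x \<and> clp v x \<le> ub x"
    using ua_ub by eventually_elim (auto simp: clp_def)
  ultimately show ?thesis by (simp add: Uad_def)
qed

lemma proj_ae:
  assumes v: "v \<in> L2 \<Omega>"
  shows "L2proj \<Omega> UU v \<in> UU" "AE x in MM. L2proj \<Omega> UU v x = clp v x"
proof -
  define c where "c = clp v"
  have cU: "c \<in> UU" unfolding c_def using clp_Uad L2D(1)[OF v] by blast
  have cL2: "c \<in> L2 \<Omega>" using cU by (simp add: Uad_def)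
  have ptle: "AE x in MM. (v x - c x)\<^sup>2 \<le> (v x - q x)\<^sup>2" if q: "q \<in> UU" for q
  proof -
    have "AE x in MM. ua x \<le> q x \<and> q x \<le> ub x" using q by (simp add: Uad_def)
    then show ?thesis using ua_ub by eventually_elim (auto simp: c_def clp_def intro: P1a)
  qed
  have intsq: "integrable MM (\<lambda>x. (v x - q x)\<^sup>2)" if "q \<in> L2 \<Omega>" for q
    using L2D(2)[OF L2_diff[OF v that]] .
  have nrm: "L2norm \<Omega> (\<lambda>x. v x - c x) \<le> L2norm \<Omega> (\<lambda>x. v x - q x)" if q: "q \<in> UU" for q
  proof -
    have qL: "q \<in> L2 \<Omega>" using q by (simp add: Uad_def)
    have "integral\<^sup>L MM (\<lambda>x. (v x - c x)\<^sup>2) \<le> integral\<^sup>L MM (\<lambda>x. (v x - q x)\<^sup>2)"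
      by (rule integral_mono_AE[OF intsq[OF cL2] intsq[OF qL] ptle[OF q]])
    then show ?thesis by (simp add: L2norm_def L2inner_def power2_eq_square)
  qed
  have ex: "\<exists>p. p \<in> UU \<and> (\<forall>q\<in>UU. L2norm \<Omega> (\<lambda>x. v x - p x) \<le> L2norm \<Omega> (\<lambda>x. v x - q x))"
    using cU nrm by blast
  define p where "p = L2proj \<Omega> UU v"
  have pp: "p \<in> UU \<and> (\<forall>q\<in>UU. L2norm \<Omega> (\<lambda>x. v x - p x) \<le> L2norm \<Omega> (\<lambda>x. v x - q x))"
    unfolding p_def L2proj_def by (rule someI_ex[OF ex])
  then show "L2proj \<Omega> UU v \<in> UU" by (simp add: p_def)
  have pU: "p \<in> UU" using pp by simp
  have pL2: "p \<in> L2 \<Omega>" using pU by (simp add: Uad_def)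
  have "L2norm \<Omega> (\<lambda>x. v x - p x) \<le> L2norm \<Omega> (\<lambda>x. v x - c x)" using pp cU by blast
  then have le: "integral\<^sup>L MM (\<lambda>x. (v x - p x)\<^sup>2) \<le> integral\<^sup>L MM (\<lambda>x. (v x - c x)\<^sup>2)"
    by (simp add: L2norm_def L2inner_def power2_eq_square)
  define f where "f x = (v x - p x)\<^sup>2 - (v x - c x)\<^sup>2" for x
  have fint: "integrable MM f" unfolding f_def using intsq[OF pL2] intsq[OF cL2] by auto
  have fnn: "AE x in MM. 0 \<le> f x" using ptle[OF pU] unfolding f_def by eventually_elim simp
  have "integral\<^sup>L MM f = integral\<^sup>L MM (\<lambda>x. (v x - p x)\<^sup>2) - integral\<^sup>L MM (\<lambda>x. (v x - c x)\<^sup>2)"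
    unfolding f_def by (rule Bochner_Integration.integral_diff[OF intsq[OF pL2] intsq[OF cL2]])
  then have "integral\<^sup>L MM f \<le> 0" using le by simp
  moreover have "0 \<le> integral\<^sup>L MM f" by (rule integral_nonneg_AE[OF fnn])
  ultimately have "integral\<^sup>L MM f = 0" by simp
  then have f0: "AE x in MM. f x = 0" using integral_nonneg_eq_0_iff_AE[OF fint fnn] by simp
  have "AE x in MM. p x = c x"
    using f0 Uad_bdd[OF pU] ua_ub
  proof eventually_elim
    case (elim x)
    show ?case unfolding c_def clp_def
      by (rule P1b[where a="ua x" and b="ub x" and q="p x" and v="v x"]) (use elim in \<open>auto simp: f_def c_def clp_def\<close>)
  qed
  then show "AE x in MM. L2proj \<Omega> UU v x = clp v x" by (simp add: p_def c_def)
qed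

lemma Shadj_L2: "h \<ge> 0 \<Longrightarrow> Shadj h y \<in> L2 \<Omega>"
  using Sh_adj by (simp add: is_adjoint_def)

lemma Sadj_L2: "Sadj y \<in> L2 \<Omega>"
  using S_adj by (simp add: is_adjoint_def)

lemma udag_L2: "udag \<in> L2 \<Omega>" using udag_mem by (simp add: Uad_def)

lemma S_lin_eq: "f \<in> L2 \<Omega> \<Longrightarrow> g \<in> L2 \<Omega> \<Longrightarrow> S (\<lambda>x. a * f x + b * g x) = a *\<^sub>R S f + b *\<^sub>R S g"
  using S_lin by (simp add: bounded_linear_L2_def)

lemma S_diff: "f \<in> L2 \<Omega> \<Longrightarrow> g \<in> L2 \<Omega> \<Longrightarrow> S (\<lambda>x. f x - g x) = S f - S g"
  using S_lin_eq[of f g 1 "-1"] by simp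

lemma Sh_lin_eq: "h \<ge> 0 \<Longrightarrow> f \<in> L2 \<Omega> \<Longrightarrow> g \<in> L2 \<Omega> \<Longrightarrow> Sh h (\<lambda>x. a * f x + b * g x) = a *\<^sub>R Sh h f + b *\<^sub>R Sh h g"
  using Sh_lin[of h] by (simp add: bounded_linear_L2_def)

lemma Sh_diff: "h \<ge> 0 \<Longrightarrow> f \<in> L2 \<Omega> \<Longrightarrow> g \<in> L2 \<Omega> \<Longrightarrow> Sh h (\<lambda>x. f x - g x) = Sh h f - Sh h g"
  using Sh_lin_eq[of h f g 1 "-1"] by simp

lemma S_adj_eq: "f \<in> L2 \<Omega> \<Longrightarrow> inner (S f) y = L2inner \<Omega> f (Sadj y)"
  using S_adj by (simp add: is_adjoint_def)

lemma Sh_adj_eq: "h \<ge> 0 \<Longrightarrow> f \<in> L2 \<Omega> \<Longrightarrow> inner (Sh h f) y = L2inner \<Omega> f (Shadj h y)"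
  using Sh_adj by (simp add: is_adjoint_def)

definition lam where "lam h k = bregman_lambda (Sh h) (Shadj h) z \<alpha> (u h) k"

lemma lam_L2: "h \<ge> 0 \<Longrightarrow> lam h k \<in> L2 \<Omega>"
  unfolding lam_def bregman_lambda_def by (rule L2_sum) (auto intro: Shadj_L2)

lemma iter:
  assumes h: "0 < h" "h \<le> hmax" and k: "k \<ge> 1"
  shows "AE x in MM. u h k x = clp (lam h k) x"
proof -
  have st: "u h k \<in> UU" and B: "bregman_B \<Omega> ua ub (Sh h) (Shadj h) z (\<alpha> k)
           (bregman_lambda (Sh h) (Shadj h) z \<alpha> (u h) (k - 1)) (u h k) \<le> 0"
    using u_step[OF h k] by auto
  have eqf: "(\<lambda>y. 1 / \<alpha> k * Shadj h (z - Sh h (u h k)) y + bregman_lambda (Sh h) (Shadj h) z \<alpha> (u h) (k - 1) y) = lam h k"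
  proof -
    obtain m where m: "k = Suc m" using k by (cases k) auto
    show ?thesis unfolding lam_def bregman_lambda_def m
      by (intro ext) (simp add: sum.cl_ivl_Suc add.commute)
  qed
  define P where "P = L2proj \<Omega> UU (lam h k)"
  have a1: "1 + 1 / \<alpha> k > 0" using \<alpha>_pos[OF k] by (simp add: add_pos_pos)
  have "(1 + 1 / \<alpha> k) * L2norm \<Omega> (\<lambda>x. u h k x - P x) \<le> 0"
    using B unfolding bregman_B_def eqf P_def .
  then have nle: "L2norm \<Omega> (\<lambda>x. u h k x - P x) \<le> 0" using a1 by (simp add: mult_le_0_iff)
  define g where "g x = u h k x - P x" for x
  have lL: "lam h k \<in> L2 \<Omega>" using h by (intro lam_L2) simp
  have PU: "P \<in> UU" and Pae: "AE x in MM. P x = clp (lam h k) x"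
    using proj_ae[OF lL] unfolding P_def by auto
  have gL2: "g \<in> L2 \<Omega>" unfolding g_def using st PU by (intro L2_diff) (auto simp: Uad_def)
  have gi: "integrable MM (\<lambda>x. g x * g x)" by (rule L2_mult_int[OF gL2 gL2])
  have gnn: "AE x in MM. 0 \<le> g x * g x" by (rule AE_I2) simp
  have "integral\<^sup>L MM (\<lambda>x. g x * g x) \<ge> 0" by (rule integral_nonneg_AE[OF gnn])
  moreover have "integral\<^sup>L MM (\<lambda>x. g x * g x) \<le> 0" using nle by (simp add: L2norm_def L2inner_def g_def)
  ultimately have "integral\<^sup>L MM (\<lambda>x. g x * g x) = 0" by linarith
  then have "AE x in MM. g x * g x = 0" using integral_nonneg_eq_0_iff_AE[OF gi gnn] by simp
  then show ?thesis using Pae by eventually_elim (simp add: g_def)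
qed

definition pdag where "pdag = Sadj (z - S udag)"

lemma pdag_L2: "pdag \<in> L2 \<Omega>" unfolding pdag_def by (rule Sadj_L2)

lemma vi:
  assumes v: "v \<in> UU"
  shows "L2inner \<Omega> (\<lambda>x. v x - udag x) pdag \<le> 0"
proof -
  have vL: "v \<in> L2 \<Omega>" using v by (simp add: Uad_def)
  define d where "d = S udag - z"
  define b where "b = S v - S udag"
  have key: "0 \<le> 2 * inner d b + t * (norm b)\<^sup>2" if t: "0 < t" "t \<le> 1" for t
  proof -
    define vt where "vt = (\<lambda>x. (1 - t) * udag x + t * v x)"
    have vtU: "vt \<in> UU"
    proof -
      have "vt \<in> L2 \<Omega>" unfolding vt_def by (rule L2_lin[OF udag_L2 vL])
      moreover have "AE x in MM. ua x \<le> vt x \<and> vt x \<le> ub x"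
        using Uad_bdd[OF udag_mem] Uad_bdd[OF v]
        by eventually_elim (use t in \<open>auto simp: vt_def intro: Pconv1 Pconv2\<close>)
      ultimately show ?thesis by (simp add: Uad_def)
    qed
    have "S vt = (1 - t) *\<^sub>R S udag + t *\<^sub>R S v" unfolding vt_def by (rule S_lin_eq[OF udag_L2 vL])
    then have "S vt - z = d + t *\<^sub>R b" by (simp add: d_def b_def algebra_simps)
    then have eq: "(norm (S vt - z))\<^sup>2 = (norm d)\<^sup>2 + t * (2 * inner d b + t * (norm b)\<^sup>2)"
      by (simp add: power2_norm_eq_inner inner_add_left inner_add_right inner_commute algebra_simps)
    have "(norm d)\<^sup>2 \<le> (norm (S vt - z))\<^sup>2" using udag_min[OF vtU] by (simp add: d_def)
    then have "0 \<le> t * (2 * inner d b + t * (norm b)\<^sup>2)" using eq by simp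
    then show ?thesis using t by (simp add: zero_le_mult_iff)
  qed
  have db: "0 \<le> inner d b"
  proof (rule ccontr)
    assume "\<not> 0 \<le> inner d b"
    then have s: "inner d b < 0" by simp
    define N where "N = (norm b)\<^sup>2"
    define t where "t = min 1 (- inner d b / (N + 1))"
    have N0: "N \<ge> 0" by (simp add: N_def)
    have "0 < - inner d b / (N + 1)" using s N0 by (intro divide_pos_pos) auto
    then have t0: "0 < t" "t \<le> 1" by (auto simp: t_def)
    have "t * N \<le> (- inner d b / (N + 1)) * N" using N0 by (intro mult_right_mono) (auto simp: t_def)
    also have "\<dots> = (- inner d b) * (N / (N + 1))" by simp
    also have "\<dots> < (- inner d b) * 1"
      using s N0 by (intro mult_strict_left_mono) auto
    finally have "2 * inner d b + t * N < 0" using s by linarith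
    then show False using key[OF t0] by (simp add: N_def)
  qed
  have Sd: "S (\<lambda>x. v x - udag x) = b" using S_diff[OF vL udag_L2] by (simp add: b_def)
  have zd: "z - S udag = - d" by (simp add: d_def)
  have "inner (S (\<lambda>x. v x - udag x)) (z - S udag) = - inner d b"
    unfolding Sd zd by (simp add: inner_commute)
  then have "inner (S (\<lambda>x. v x - udag x)) (z - S udag) \<le> 0" using db by simp
  then show ?thesis using S_adj_eq[OF L2_diff[OF vL udag_L2]] by (simp add: pdag_def)
qed

lemma opt_ae: "AE x in MM. (clp (\<lambda>x. udag x + pdag x) x - udag x) * pdag x = 0"
proof -
  define v where "v = clp (\<lambda>x. udag x + pdag x)"
  have vU: "v \<in> UU" unfolding v_def
    by (intro clp_Uad borel_measurable_add L2D(1) udag_L2 pdag_L2)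
  have vL: "v \<in> L2 \<Omega>" using vU by (simp add: Uad_def)
  have fi: "integrable MM (\<lambda>x. (v x - udag x) * pdag x)" by (rule L2_mult_int[OF L2_diff[OF vL udag_L2] pdag_L2])
  have fnn: "AE x in MM. 0 \<le> (v x - udag x) * pdag x"
    using Uad_bdd[OF udag_mem] by eventually_elim (auto simp: v_def clp_def intro: P3pre)
  have "integral\<^sup>L MM (\<lambda>x. (v x - udag x) * pdag x) \<le> 0" using vi[OF vU] by (simp add: L2inner_def)
  moreover have "0 \<le> integral\<^sup>L MM (\<lambda>x. (v x - udag x) * pdag x)" by (rule integral_nonneg_AE[OF fnn])
  ultimately have "integral\<^sup>L MM (\<lambda>x. (v x - udag x) * pdag x) = 0" by simp
  then show ?thesis using integral_nonneg_eq_0_iff_AE[OF fi fnn] by (simp add: v_def)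
qed

lemma opt_pt:
  assumes v: "v \<in> UU"
  shows "AE x in MM. pdag x * (v x - udag x) \<le> 0"
  using opt_ae Uad_bdd[OF udag_mem] Uad_bdd[OF v]
proof eventually_elim
  case (elim x)
  show ?case by (rule P3[where a="ua x" and b="ub x" and ud="udag x" and p="pdag x"]) (use elim in \<open>auto simp: clp_def\<close>)
qed

lemma estk:
  assumes h: "0 < h" "h \<le> hmax" and k: "k \<ge> 1" and eps: "\<epsilon> > 0"
    and I: "I \<in> sets lebesgue" "I \<subseteq> \<Omega>"
    and pI: "\<And>x. x \<in> \<Omega> \<Longrightarrow> x \<notin> I \<Longrightarrow> pdag x \<noteq> 0"
    and swI: "AE x in MM. x \<in> I \<longrightarrow> udag x = clp (Sadj w) x"
    and R: "AE x in MM. \<bar>Sadj w x - udag x\<bar> \<le> R" and R0: "R \<ge> 0"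
    and meas: "measure lebesgue {x \<in> \<Omega> - I. 0 < \<bar>pdag x\<bar> \<and> \<bar>pdag x\<bar> < \<epsilon>} \<le> cm"
  shows "L2inner \<Omega> (\<lambda>x. u h k x - udag x) (\<lambda>x. u h k x - udag x)
     \<le> (\<Sum>i=1..k. (1 / \<alpha> i) * inner (Sh h (u h k) - Sh h udag) (z - Sh h (u h i)))
       - inner (S (u h k) - S udag) w + R * (2 * BU) * cm
       + (R / \<epsilon>) * (- inner (S (u h k) - S udag) (z - S udag))"
proof -
  define e where "e x = u h k x - udag x" for x
  define l where "l = lam h k"
  define sw where "sw = Sadj w"
  define N where "N = {x \<in> \<Omega> - I. 0 < \<bar>pdag x\<bar> \<and> \<bar>pdag x\<bar> < \<epsilon>}"
  define B where "B = 2 * BU"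
  have h0: "h \<ge> 0" using h by simp
  have ukU: "u h k \<in> UU" using u_step[OF h k] by simp
  have ukL: "u h k \<in> L2 \<Omega>" using ukU by (simp add: Uad_def)
  have eL: "e \<in> L2 \<Omega>" unfolding e_def[abs_def] by (rule L2_diff[OF ukL udag_L2])
  have lL: "l \<in> L2 \<Omega>" unfolding l_def using h by (intro lam_L2) simp
  have swL: "sw \<in> L2 \<Omega>" unfolding sw_def by (rule Sadj_L2)
  have pL: "pdag \<in> L2 \<Omega>" by (rule pdag_L2)
  have pm[measurable]: "pdag \<in> borel_measurable MM" using L2D(1)[OF pL] .
  have Nsets: "N \<in> sets MM"
  proof -
    have IM: "I \<in> sets MM" using I \<Omega>_meas by (auto simp: sets_restrict_space_iff)
    have "{x \<in> space MM. 0 < \<bar>pdag x\<bar> \<and> \<bar>pdag x\<bar> < \<epsilon>} \<in> sets MM" by measurable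
    then have "{x \<in> space MM. 0 < \<bar>pdag x\<bar> \<and> \<bar>pdag x\<bar> < \<epsilon>} - I \<in> sets MM" using IM by auto
    moreover have "N = {x \<in> space MM. 0 < \<bar>pdag x\<bar> \<and> \<bar>pdag x\<bar> < \<epsilon>} - I" by (auto simp: N_def)
    ultimately show ?thesis by simp
  qed
  have NO: "N \<subseteq> \<Omega>" by (auto simp: N_def)
  have Nint: "integrable MM (indicator N :: 'a \<Rightarrow> real)"
    using Nsets finite_measure.emeasure_finite[OF fin, of N] by (simp add: less_top)
  have Nmeas: "integral\<^sup>L MM (indicator N) \<le> cm"
  proof -
    have "integral\<^sup>L MM (indicator N) = measure MM N" using NO by (simp add: Int_absorb2)
    also have "\<dots> = measure lebesgue N" using NO \<Omega>_meas by (intro measure_restrict_space) auto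
    finally show ?thesis using meas by (simp add: N_def)
  qed
  have ae: "AE x in MM. (e x)\<^sup>2 \<le> l x * e x - sw x * e x + (R * B) * indicator N x - (R / \<epsilon>) * (pdag x * e x)"
  proof -
    have a1: "AE x in MM. u h k x = clp l x" using iter[OF h k] by (simp add: l_def)
    have a5: "AE x in MM. x \<in> \<Omega>" by (rule AE_I2) simp
    show ?thesis using a1 Uad_bdd[OF udag_mem] Uad_bdd[OF ukU] opt_pt[OF ukU] ua_ub swI R a5
    proof eventually_elim
      case (elim x)
      have e2: "\<bar>udag x\<bar> \<le> BU" "ua x \<le> udag x" "udag x \<le> ub x" using elim(2) by auto
      have e4: "\<bar>u h k x\<bar> \<le> BU" "ua x \<le> u h k x" "u h k x \<le> ub x" using elim(3) by auto
      have "\<bar>u h k x - udag x\<bar> \<le> \<bar>u h k x\<bar> + \<bar>udag x\<bar>" by (rule abs_triangle_ineq4)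
      then have eB: "\<bar>u h k x - udag x\<bar> \<le> B" using e2(1) e4(1) unfolding B_def by linarith
      have e6: "u h k x = max (ua x) (min (ub x) (l x))" using elim(1) by (simp add: clp_def)
      have e9: "x \<in> I \<Longrightarrow> udag x = max (ua x) (min (ub x) (sw x))" using elim(6) by (simp add: clp_def sw_def)
      have e10: "x \<notin> I \<Longrightarrow> pdag x \<noteq> 0" using pI elim(8) by simp
      have e11: "\<bar>sw x - udag x\<bar> \<le> R" using elim(7) by (simp add: sw_def)
      have ind: "indicator N x = (if \<not> x \<in> I \<and> 0 < \<bar>pdag x\<bar> \<and> \<bar>pdag x\<bar> < \<epsilon> then 1 else (0::real))"
        using elim(8) by (simp add: N_def indicator_def)
      show ?case unfolding e_def
        by (rule P4[OF elim(5) e2(2) e2(3) e4(2) e4(3) e6 eB elim(4) e9 e10 e11 eps ind])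
    qed
  qed
  have i1: "integrable MM (\<lambda>x. l x * e x)" by (rule L2_mult_int[OF lL eL])
  have i2: "integrable MM (\<lambda>x. sw x * e x)" by (rule L2_mult_int[OF swL eL])
  have i4: "integrable MM (\<lambda>x. pdag x * e x)" by (rule L2_mult_int[OF pL eL])
  have isq: "integrable MM (\<lambda>x. (e x)\<^sup>2)" using L2D(2)[OF eL] .
  have irhs: "integrable MM (\<lambda>x. l x * e x - sw x * e x + (R * B) * indicator N x - (R / \<epsilon>) * (pdag x * e x))"
    by (intro Bochner_Integration.integrable_add Bochner_Integration.integrable_diff integrable_mult_right i1 i2 i4 Nint)
  have "L2inner \<Omega> (\<lambda>x. u h k x - udag x) (\<lambda>x. u h k x - udag x) = integral\<^sup>L MM (\<lambda>x. (e x)\<^sup>2)"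
    unfolding L2inner_def e_def power2_eq_square by (rule refl)
  also have "\<dots> \<le> integral\<^sup>L MM (\<lambda>x. l x * e x - sw x * e x + (R * B) * indicator N x - (R / \<epsilon>) * (pdag x * e x))"
    by (rule integral_mono_AE[OF isq irhs ae])
  also have "\<dots> = integral\<^sup>L MM (\<lambda>x. l x * e x) - integral\<^sup>L MM (\<lambda>x. sw x * e x) + (R * B) * integral\<^sup>L MM (indicator N)
      - (R / \<epsilon>) * integral\<^sup>L MM (\<lambda>x. pdag x * e x)"
  proof -
    have j1: "integrable MM (\<lambda>x. l x * e x - sw x * e x)" by (intro Bochner_Integration.integrable_diff i1 i2)
    have j2: "integrable MM (\<lambda>x. l x * e x - sw x * e x + (R * B) * indicator N x)"
      by (intro Bochner_Integration.integrable_add integrable_mult_right j1 Nint)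
    have "integral\<^sup>L MM (\<lambda>x. l x * e x - sw x * e x + (R * B) * indicator N x - (R / \<epsilon>) * (pdag x * e x))
        = integral\<^sup>L MM (\<lambda>x. l x * e x - sw x * e x + (R * B) * indicator N x) - integral\<^sup>L MM (\<lambda>x. (R / \<epsilon>) * (pdag x * e x))"
      by (rule Bochner_Integration.integral_diff[OF j2]) (intro integrable_mult_right i4)
    also have "integral\<^sup>L MM (\<lambda>x. l x * e x - sw x * e x + (R * B) * indicator N x)
        = integral\<^sup>L MM (\<lambda>x. l x * e x - sw x * e x) + integral\<^sup>L MM (\<lambda>x. (R * B) * indicator N x)"
      by (rule Bochner_Integration.integral_add[OF j1]) (intro integrable_mult_right Nint)
    also have "integral\<^sup>L MM (\<lambda>x. l x * e x - sw x * e x) = integral\<^sup>L MM (\<lambda>x. l x * e x) - integral\<^sup>L MM (\<lambda>x. sw x * e x)"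
      by (rule Bochner_Integration.integral_diff[OF i1 i2])
    finally show ?thesis by simp
  qed
  also have "\<dots> \<le> (\<Sum>i=1..k. (1 / \<alpha> i) * inner (Sh h (u h k) - Sh h udag) (z - Sh h (u h i)))
       - inner (S (u h k) - S udag) w + R * (2 * BU) * cm
       + (R / \<epsilon>) * (- inner (S (u h k) - S udag) (z - S udag))"
  proof -
    have Se: "S e = S (u h k) - S udag" unfolding e_def[abs_def] by (rule S_diff[OF ukL udag_L2])
    have She: "Sh h e = Sh h (u h k) - Sh h udag" unfolding e_def[abs_def] by (rule Sh_diff[OF h0 ukL udag_L2])
    have I1: "integral\<^sup>L MM (\<lambda>x. l x * e x) = (\<Sum>i=1..k. (1 / \<alpha> i) * inner (Sh h (u h k) - Sh h udag) (z - Sh h (u h i)))"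
    proof -
      have "integral\<^sup>L MM (\<lambda>x. l x * e x) = L2inner \<Omega> l e" by (simp add: L2inner_def)
      also have "\<dots> = (\<Sum>i=1..k. (1 / \<alpha> i) * L2inner \<Omega> (Shadj h (z - Sh h (u h i))) e)"
        unfolding l_def lam_def bregman_lambda_def
        by (rule L2inner_sum) (use eL h0 Shadj_L2 in auto)
      also have "\<dots> = (\<Sum>i=1..k. (1 / \<alpha> i) * inner (Sh h (u h k) - Sh h udag) (z - Sh h (u h i)))"
        by (intro sum.cong refl) (simp add: L2inner_comm[of _ e] Sh_adj_eq[OF h0 eL, symmetric] She)
      finally show ?thesis .
    qed
    have I2: "integral\<^sup>L MM (\<lambda>x. sw x * e x) = inner (S (u h k) - S udag) w"
      using S_adj_eq[OF eL, of w] Se by (simp add: L2inner_def sw_def mult.commute)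
    have I4: "integral\<^sup>L MM (\<lambda>x. pdag x * e x) = inner (S (u h k) - S udag) (z - S udag)"
      using S_adj_eq[OF eL, of "z - S udag"] Se by (simp add: L2inner_def pdag_def mult.commute)
    have RB: "(R * B) * integral\<^sup>L MM (indicator N) \<le> R * (2 * BU) * cm"
      using Nmeas R0 BU0 unfolding B_def by (intro mult_left_mono) auto
    show ?thesis unfolding I1 I2 I4 using RB by simp
  qed
  finally show ?thesis .
qed

definition KS where "KS = (SOME K. \<forall>f\<in>L2 \<Omega>. norm (S f) \<le> K * L2norm \<Omega> f)"

lemma KS: "f \<in> L2 \<Omega> \<Longrightarrow> norm (S f) \<le> KS * L2norm \<Omega> f"
proof -
  have "\<exists>K. \<forall>f\<in>L2 \<Omega>. norm (S f) \<le> K * L2norm \<Omega> f" using S_lin by (simp add: bounded_linear_L2_def)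
  then have "\<forall>f\<in>L2 \<Omega>. norm (S f) \<le> KS * L2norm \<Omega> f" unfolding KS_def by (rule someI_ex)
  then show "f \<in> L2 \<Omega> \<Longrightarrow> norm (S f) \<le> KS * L2norm \<Omega> f" by blast
qed

definition M1 where "M1 = \<bar>KS\<bar> * sqrt (BU\<^sup>2 * measure MM \<Omega>)"

lemma M1_nonneg: "M1 \<ge> 0" unfolding M1_def by simp

lemma M1: assumes v: "v \<in> UU" shows "norm (S v) \<le> M1"
proof -
  have vL: "v \<in> L2 \<Omega>" using v by (simp add: Uad_def)
  have "AE x in MM. v x * v x \<le> BU\<^sup>2"
    using Uad_bdd[OF v]
  proof eventually_elim
    case (elim x)
    have "\<bar>v x\<bar>\<^sup>2 \<le> BU\<^sup>2" using elim by (intro power_mono) auto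
    then show ?case by (simp add: power2_eq_square)
  qed
  then have "L2inner \<Omega> v v \<le> integral\<^sup>L MM (\<lambda>x. BU\<^sup>2)"
    unfolding L2inner_def by (intro integral_mono_AE L2_mult_int vL int_const)
  also have "\<dots> = BU\<^sup>2 * measure MM \<Omega>" by simp
  finally have "L2norm \<Omega> v \<le> sqrt (BU\<^sup>2 * measure MM \<Omega>)" unfolding L2norm_def by simp
  then have "\<bar>KS\<bar> * L2norm \<Omega> v \<le> M1" unfolding M1_def by (intro mult_left_mono) auto
  moreover have "KS * L2norm \<Omega> v \<le> \<bar>KS\<bar> * L2norm \<Omega> v" using L2norm_nonneg by (intro mult_right_mono) auto
  ultimately show ?thesis using KS[OF vL] by linarith
qed

lemma key:
  assumes I: "I \<in> sets lebesgue" "I \<subseteq> \<Omega>"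
    and pI: "\<And>x. x \<in> \<Omega> \<Longrightarrow> x \<notin> I \<Longrightarrow> pdag x \<noteq> 0"
    and swI: "AE x in MM. x \<in> I \<longrightarrow> udag x = clp (Sadj w) x"
    and R: "AE x in MM. \<bar>Sadj w x - udag x\<bar> \<le> R" and R0: "R \<ge> 0"
    and mb: "\<And>\<epsilon>. \<epsilon> > 0 \<Longrightarrow> measure lebesgue {x \<in> \<Omega> - I. 0 < \<bar>pdag x\<bar> \<and> \<bar>pdag x\<bar> < \<epsilon>} \<le> c * \<epsilon> powr \<kappa>"
    and c0: "c \<ge> 0"
    and Ma: "\<And>k. k \<ge> 1 \<Longrightarrow> \<alpha> k \<le> Ma"
    and dm: "\<delta> h \<le> \<delta> hmax"
    and eps: "\<epsilon> > 0" and h: "0 < h" "h \<le> hmax" and K: "K \<ge> 1"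
  shows "\<exists>i\<in>{1..K}. (L2norm \<Omega> (\<lambda>x. u h i x - udag x))\<^sup>2
     \<le> (2 * norm (z - S udag) + 2 * \<delta> hmax + 2 * M1) * \<delta> h * gam \<alpha> K
       + ((2 * M1 * norm (z - S udag)) * R\<^sup>2 / 2 / \<epsilon>\<^sup>2 + (norm w)\<^sup>2 / 2) / gam \<alpha> K
       + (2 * norm w) * \<delta> h + (R * (2 * BU) * c) * \<epsilon> powr \<kappa>"
proof -
  define Ek where "Ek k = L2inner \<Omega> (\<lambda>x. u h k x - udag x) (\<lambda>x. u h k x - udag x)" for k
  define q where "q k = - inner (S (u h k) - S udag) (z - S udag)" for k
  define M2 where "M2 = 2 * M1"
  define na where "na = norm (z - S udag)"
  define Q0 where "Q0 = M2 * na"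
  have h0: "h \<ge> 0" using h by simp
  have ukU: "u h k \<in> UU" if "k \<in> {1..K}" for k using u_step[OF h] that by auto
  have dTv: "norm (Sh h v - S v) \<le> \<delta> h" if v: "v \<in> UU" for v
  proof -
    have "norm (S v - Sh h v) + L2norm \<Omega> (\<lambda>x. Sadj (Sh h v - z) x - Shadj h (Sh h v - z) x) \<le> \<delta> h"
      by (rule \<delta>_bound[OF h0 v])
    then show ?thesis using L2norm_nonneg[of "\<lambda>x. Sadj (Sh h v - z) x - Shadj h (Sh h v - z) x"]
      by (simp add: norm_minus_commute)
  qed
  have p_dT: "\<And>k. k \<in> {1..K} \<Longrightarrow> norm (Sh h (u h k) - S (u h k)) \<le> \<delta> h" using dTv ukU by blast
  have p_dTd: "norm (Sh h udag - S udag) \<le> \<delta> h" using dTv udag_mem by blast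
  have p_M2: "\<And>k. k \<in> {1..K} \<Longrightarrow> norm (S (u h k) - S udag) \<le> M2"
  proof -
    fix k assume k: "k \<in> {1..K}"
    have "norm (S (u h k) - S udag) \<le> norm (S (u h k)) + norm (S udag)" by (rule norm_triangle_ineq4)
    then show "norm (S (u h k) - S udag) \<le> M2" using M1[OF ukU[OF k]] M1[OF udag_mem] unfolding M2_def by linarith
  qed
  have p_qdef: "\<And>k. k \<in> {1..K} \<Longrightarrow> q k = - inner (S (u h k) - S udag) (z - S udag)" by (simp add: q_def)
  have p_qnn: "\<And>k. k \<in> {1..K} \<Longrightarrow> 0 \<le> q k"
  proof -
    fix k assume k: "k \<in> {1..K}"
    have ukL: "u h k \<in> L2 \<Omega>" using ukU[OF k] by (simp add: Uad_def)
    have eL: "(\<lambda>x. u h k x - udag x) \<in> L2 \<Omega>" by (rule L2_diff[OF ukL udag_L2])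
    have "0 \<le> integral\<^sup>L MM (\<lambda>x. - ((u h k x - udag x) * pdag x))"
      using opt_pt[OF ukU[OF k]] by (intro integral_nonneg_AE) (auto simp: mult.commute elim!: AE_mp intro!: AE_I2)
    also have "\<dots> = - L2inner \<Omega> (\<lambda>x. u h k x - udag x) pdag" by (simp add: L2inner_def)
    also have "\<dots> = q k" unfolding q_def S_diff[OF ukL udag_L2, symmetric] S_adj_eq[OF eL] pdag_def ..
    finally show "0 \<le> q k" .
  qed
  have p_qle: "\<And>k. k \<in> {1..K} \<Longrightarrow> q k \<le> Q0"
  proof -
    fix k assume k: "k \<in> {1..K}"
    have "q k \<le> \<bar>inner (S (u h k) - S udag) (z - S udag)\<bar>" unfolding q_def by simp
    also have "\<dots> \<le> norm (S (u h k) - S udag) * norm (z - S udag)" by (rule Cauchy_Schwarz_ineq2)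
    also have "\<dots> \<le> M2 * na" unfolding na_def using p_M2[OF k] by (intro mult_right_mono) auto
    finally show "q k \<le> Q0" by (simp add: Q0_def)
  qed
  have p_Q0: "Q0 \<ge> 0" unfolding Q0_def M2_def na_def using M1_nonneg by simp
  have p_X: "R / \<epsilon> \<ge> 0" using R0 eps by simp
  have p_Ek: "\<And>k. k \<in> {1..K} \<Longrightarrow> Ek k \<le> (\<Sum>i=1..k. (1 / \<alpha> i) * inner (Sh h (u h k) - Sh h udag) (z - Sh h (u h i)))
              - inner (S (u h k) - S udag) w + R * (2 * BU) * (c * \<epsilon> powr \<kappa>) + R / \<epsilon> * q k"
  proof -
    fix k assume k: "k \<in> {1..K}"
    have k1: "k \<ge> 1" using k by simp
    show "Ek k \<le> (\<Sum>i=1..k. (1 / \<alpha> i) * inner (Sh h (u h k) - Sh h udag) (z - Sh h (u h i)))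
              - inner (S (u h k) - S udag) w + R * (2 * BU) * (c * \<epsilon> powr \<kappa>) + R / \<epsilon> * q k"
      unfolding Ek_def q_def by (rule estk[OF h k1 eps I pI swI R R0 mb[OF eps]])
  qed
  have p_apos: "\<And>k. k \<ge> 1 \<Longrightarrow> \<alpha> k > 0" by (rule \<alpha>_pos)
  have ABS: "(\<Sum>k=1..K. (1 / \<alpha> k) * Ek k) \<le> (gam \<alpha> K)\<^sup>2 * (\<delta> h * (2 * norm (z - S udag) + 2 * \<delta> h + M2))
           + Q0 * (R / \<epsilon>)\<^sup>2 / 2 + (norm w)\<^sup>2 / 2 + gam \<alpha> K * (2 * \<delta> h * norm w + R * (2 * BU) * (c * \<epsilon> powr \<kappa>))"
    by (rule abstract_est[where Tu="\<lambda>i. Sh h (u h i)" and Su="\<lambda>i. S (u h i)" and Tud="Sh h udag"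
          and Sud="S udag" and z=z and w=w and a=\<alpha> and Ek=Ek and q=q and K=K and \<delta>="\<delta> h"
          and Mb=M2 and Qz=Q0 and X="R / \<epsilon>" and Ce="R * (2 * BU) * (c * \<epsilon> powr \<kappa>)",
          OF p_apos p_dT p_dTd p_M2 p_qdef p_qnn p_qle p_Q0 p_X p_Ek])
  have finE: "finite (Ek ` {1..K})" by simp
  have neE: "Ek ` {1..K} \<noteq> {}" using K by auto
  obtain i where i: "i \<in> {1..K}" "Ek i = Min (Ek ` {1..K})" using Min_in[OF finE neE] by auto
  have imin: "Ek i \<le> Ek k" if "k \<in> {1..K}" for k using i Min_le[OF finE] that by auto
  have Ma0: "Ma > 0" using \<alpha>_pos[of 1] Ma[of 1] by simp
  define g where "g = gam \<alpha> K"
  have g0: "g > 0"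
  proof -
    have "real K / Ma \<le> g" unfolding g_def by (rule gam_lower) (use \<alpha>_pos Ma in auto)
    moreover have "real K / Ma > 0" using K Ma0 by simp
    ultimately show ?thesis by linarith
  qed
  have "g * Ek i = (\<Sum>k=1..K. (1 / \<alpha> k) * Ek i)" unfolding g_def gam_def by (simp add: sum_distrib_right)
  also have "\<dots> \<le> (\<Sum>k=1..K. (1 / \<alpha> k) * Ek k)"
    using imin \<alpha>_pos by (intro sum_mono mult_left_mono) (auto simp: less_imp_le)
  finally have gE: "g * Ek i \<le> g\<^sup>2 * (\<delta> h * (2 * na + 2 * \<delta> h + M2))
           + Q0 * (R / \<epsilon>)\<^sup>2 / 2 + (norm w)\<^sup>2 / 2 + g * (2 * \<delta> h * norm w + R * (2 * BU) * (c * \<epsilon> powr \<kappa>))"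
    using ABS unfolding g_def na_def by linarith
  define c1 where "c1 = 2 * na + 2 * \<delta> hmax + M2"
  define W where "W = Q0 * R\<^sup>2 / 2 / \<epsilon>\<^sup>2 + (norm w)\<^sup>2 / 2"
  define T where "T = 2 * \<delta> h * norm w + R * (2 * BU) * (c * \<epsilon> powr \<kappa>)"
  have dh: "\<delta> h \<ge> 0" using \<delta>_nonneg h0 by simp
  have A1: "\<delta> h * (2 * na + 2 * \<delta> h + M2) \<le> c1 * \<delta> h"
  proof -
    have "\<delta> h * (2 * na + 2 * \<delta> h + M2) \<le> \<delta> h * c1" unfolding c1_def using dh dm by (intro mult_left_mono) auto
    then show ?thesis by (simp add: mult.commute)
  qed
  have W_eq: "Q0 * (R / \<epsilon>)\<^sup>2 / 2 + (norm w)\<^sup>2 / 2 = W" unfolding W_def by (simp add: power_divide)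
  have "g * Ek i \<le> g\<^sup>2 * (c1 * \<delta> h) + W + g * T"
  proof -
    have "g\<^sup>2 * (\<delta> h * (2 * na + 2 * \<delta> h + M2)) \<le> g\<^sup>2 * (c1 * \<delta> h)" using A1 by (intro mult_left_mono) auto
    then show ?thesis using gE W_eq unfolding T_def by linarith
  qed
  then have "g * Ek i \<le> g * (g * (c1 * \<delta> h) + T) + W" by (simp add: power2_eq_square algebra_simps)
  then have "Ek i \<le> (g * (g * (c1 * \<delta> h) + T) + W) / g" using g0 by (simp add: pos_le_divide_eq mult.commute)
  also have "\<dots> = g * (c1 * \<delta> h) + T + W / g" using g0 by (simp add: field_simps)
  finally have EB: "Ek i \<le> g * (c1 * \<delta> h) + T + W / g" .
  have "(L2norm \<Omega> (\<lambda>x. u h i x - udag x))\<^sup>2 = Ek i" unfolding Ek_def by (rule L2norm_sq)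
  also have "\<dots> \<le> (2 * norm (z - S udag) + 2 * \<delta> hmax + 2 * M1) * \<delta> h * gam \<alpha> K
       + ((2 * M1 * norm (z - S udag)) * R\<^sup>2 / 2 / \<epsilon>\<^sup>2 + (norm w)\<^sup>2 / 2) / gam \<alpha> K
       + (2 * norm w) * \<delta> h + (R * (2 * BU) * c) * \<epsilon> powr \<kappa>"
    using EB unfolding g_def c1_def T_def W_def Q0_def M2_def na_def by (simp add: algebra_simps)
  finally show ?thesis using i(1) by blast
qed

end

theorem corollary4p7:
  fixes \<Omega> :: "'a::euclidean_space set"
    and S :: "('a \<Rightarrow> real) \<Rightarrow> 'y::{real_inner, complete_space}"
    and Sadj :: "'y \<Rightarrow> 'a \<Rightarrow> real"
    and Sh :: "real \<Rightarrow> ('a \<Rightarrow> real) \<Rightarrow> 'y"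
    and Shadj :: "real \<Rightarrow> 'y \<Rightarrow> 'a \<Rightarrow> real"
    and z :: 'y
    and ua ub udag :: "'a \<Rightarrow> real"
    and \<delta> :: "real \<Rightarrow> real"
    and \<alpha> :: "nat \<Rightarrow> real"
    and hmax :: real
    and u :: "real \<Rightarrow> nat \<Rightarrow> 'a \<Rightarrow> real"
  assumes \<Omega>_bounded: "bounded \<Omega>" and \<Omega>_meas: "\<Omega> \<in> sets lebesgue"
    and S_lin: "bounded_linear_L2 \<Omega> S" and S_adj: "is_adjoint \<Omega> S Sadj"
    and ua: "Linfty \<Omega> ua" and ub: "Linfty \<Omega> ub"
    and ua_ub: "AE x in lebesgue_on \<Omega>. ua x \<le> ub x"
    and Sh_lin: "\<And>h. h \<ge> 0 \<Longrightarrow> bounded_linear_L2 \<Omega> (Sh h)"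
    and Sh_adj: "\<And>h. h \<ge> 0 \<Longrightarrow> is_adjoint \<Omega> (Sh h) (Shadj h)"
    and Sh_fin: "\<And>h. h > 0 \<Longrightarrow> finite_dim_range \<Omega> (Sh h)"
    and \<delta>_cont: "continuous_on {0..} \<delta>" and \<delta>_mono: "mono_on {0..} \<delta>"
    and \<delta>_0: "\<delta> 0 = 0" and \<delta>_nonneg: "\<And>h. h \<ge> 0 \<Longrightarrow> \<delta> h \<ge> 0"
    and \<delta>_bound: "\<And>h v. h \<ge> 0 \<Longrightarrow> v \<in> Uad \<Omega> ua ub \<Longrightarrow>
         norm (S v - Sh h v)
         + L2norm \<Omega> (\<lambda>x. Sadj (Sh h v - z) x - Shadj h (Sh h v - z) x) \<le> \<delta> h"
    and \<alpha>_pos: "\<And>k. k \<ge> 1 \<Longrightarrow> \<alpha> k > 0"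
    and \<alpha>_bdd: "\<exists>M. \<forall>k\<ge>1. \<alpha> k \<le> M"
    and udag_mem: "udag \<in> Uad \<Omega> ua ub"
    and udag_min: "\<And>v. v \<in> Uad \<Omega> ua ub \<Longrightarrow> (norm (S udag - z))\<^sup>2 / 2 \<le> (norm (S v - z))\<^sup>2 / 2"
    and asc: "active_set_condition \<Omega> ua ub Sadj S z udag"
    and hmax_pos: "hmax > 0"
    and u_init: "\<And>h. 0 < h \<Longrightarrow> h \<le> hmax \<Longrightarrow> u h 0 = L2proj \<Omega> (Uad \<Omega> ua ub) (\<lambda>x. 0)"
    and u_step: "\<And>h k. 0 < h \<Longrightarrow> h \<le> hmax \<Longrightarrow> k \<ge> 1 \<Longrightarrow>
         u h k \<in> Uad \<Omega> ua ub \<and>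
         bregman_B \<Omega> ua ub (Sh h) (Shadj h) z (\<alpha> k)
           (bregman_lambda (Sh h) (Shadj h) z \<alpha> (u h) (k - 1)) (u h k) \<le> 0"
  shows "\<exists>C::real. \<exists>kh :: real \<Rightarrow> nat.
           (\<forall>h. 0 < h \<and> h \<le> hmax \<longrightarrow> (\<Sum>i=1..kh h. Hterm \<delta> h \<alpha> i) \<le> C) \<and>
           filterlim kh at_top (at_right 0) \<and>
           ((\<lambda>h. Min ((\<lambda>i. L2norm \<Omega> (\<lambda>x. u h i x - udag x)) ` {1..kh h})) \<longlongrightarrow> 0) (at_right 0)"
proof -
  interpret cor47 \<Omega> S Sadj Sh Shadj z ua ub udag \<delta> \<alpha> hmax u
    by (rule cor47.intro) (fact assms)+
  obtain Ma where Ma: "\<And>k. k \<ge> 1 \<Longrightarrow> \<alpha> k \<le> Ma" using \<alpha>_bdd by blast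
  have dlim: "(\<delta> \<longlongrightarrow> 0) (at_right 0)"
  proof -
    have "(\<delta> \<longlongrightarrow> \<delta> 0) (at 0 within {0..})" using \<delta>_cont by (simp add: continuous_on_def)
    then have "(\<delta> \<longlongrightarrow> \<delta> 0) (at 0 within {0<..})" by (rule tendsto_within_subset) auto
    then show ?thesis using \<delta>_0 by simp
  qed
  have dmono: "\<delta> h \<le> \<delta> hmax" if "0 < h" "h \<le> hmax" for h
    by (rule mono_onD[OF \<delta>_mono]) (use that in auto)
  obtain I w \<kappa> c where I: "I \<in> sets lebesgue" "I \<subseteq> \<Omega>" and kap: "\<kappa> > 0" and c: "c > 0"
    and zI: "{x \<in> \<Omega>. pdag x = 0} \<subseteq> I"
    and uI: "AE x in lebesgue_on \<Omega>. x \<in> I \<longrightarrow> udag x = L2proj \<Omega> (Uad \<Omega> ua ub) (Sadj w) x"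
    and mb: "\<forall>\<epsilon>>0. measure lebesgue {x \<in> \<Omega> - I. 0 < \<bar>pdag x\<bar> \<and> \<bar>pdag x\<bar> < \<epsilon>} \<le> c * \<epsilon> powr \<kappa>"
    and swinf: "Linfty \<Omega> (Sadj w)"
    using asc unfolding active_set_condition_def Let_def pdag_def[symmetric] by blast
  have pI: "\<And>x. x \<in> \<Omega> \<Longrightarrow> x \<notin> I \<Longrightarrow> pdag x \<noteq> 0" using zI by blast
  have swI: "AE x in lebesgue_on \<Omega>. x \<in> I \<longrightarrow> udag x = clp (Sadj w) x"
    using uI proj_ae(2)[OF Sadj_L2[of w]] by eventually_elim auto
  obtain Bw where Bw: "AE x in lebesgue_on \<Omega>. \<bar>Sadj w x\<bar> \<le> Bw" using swinf by (auto simp: Linfty_def)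
  define R where "R = \<bar>Bw\<bar> + BU"
  have R0: "R \<ge> 0" unfolding R_def using BU0 by simp
  have R: "AE x in lebesgue_on \<Omega>. \<bar>Sadj w x - udag x\<bar> \<le> R"
    using Bw Uad_bdd[OF udag_mem]
  proof eventually_elim
    case (elim x)
    have "\<bar>Sadj w x - udag x\<bar> \<le> \<bar>Sadj w x\<bar> + \<bar>udag x\<bar>" by (rule abs_triangle_ineq4)
    then show ?case using elim unfolding R_def by linarith
  qed
  have mb': "\<And>\<epsilon>. \<epsilon> > 0 \<Longrightarrow> measure lebesgue {x \<in> \<Omega> - I. 0 < \<bar>pdag x\<bar> \<and> \<bar>pdag x\<bar> < \<epsilon>} \<le> c * \<epsilon> powr \<kappa>"
    using mb by blast
  have dh0: "\<delta> hmax \<ge> 0" using \<delta>_nonneg hmax_pos by simp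
  show ?thesis
  proof (rule final_asm[where \<delta>=\<delta> and \<alpha>=\<alpha> and Ma=Ma and hmax=hmax
        and err="\<lambda>h i. L2norm \<Omega> (\<lambda>x. u h i x - udag x)"
        and ca="2 * norm (z - S udag) + 2 * \<delta> hmax + 2 * M1"
        and P="(2 * M1 * norm (z - S udag)) * R\<^sup>2 / 2" and Q="(norm w)\<^sup>2 / 2"
        and cb="2 * norm w" and cc="R * (2 * BU) * c" and \<kappa>=\<kappa>])
    show "\<And>k. k \<ge> 1 \<Longrightarrow> \<alpha> k > 0" by (rule \<alpha>_pos)
    show "\<And>k. k \<ge> 1 \<Longrightarrow> \<alpha> k \<le> Ma" by (rule Ma)
    show "\<And>h. h \<ge> 0 \<Longrightarrow> \<delta> h \<ge> 0" by (rule \<delta>_nonneg)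
    show "(\<delta> \<longlongrightarrow> 0) (at_right 0)" by (rule dlim)
    show "\<And>h. 0 < h \<Longrightarrow> h \<le> hmax \<Longrightarrow> \<delta> h \<le> \<delta> hmax" by (rule dmono)
    show "hmax > 0" by (rule hmax_pos)
    show "\<And>h i. L2norm \<Omega> (\<lambda>x. u h i x - udag x) \<ge> 0" by (rule L2norm_nonneg)
    show "2 * norm (z - S udag) + 2 * \<delta> hmax + 2 * M1 \<ge> 0" using dh0 M1_nonneg by simp
    show "2 * norm w \<ge> 0" by simp
    show "R * (2 * BU) * c \<ge> 0" using R0 BU0 c by simp
    show "(2 * M1 * norm (z - S udag)) * R\<^sup>2 / 2 \<ge> 0" using M1_nonneg by simp
    show "(norm w)\<^sup>2 / 2 \<ge> 0" by simp
    show "\<kappa> > 0" by (rule kap)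
    show "\<And>\<epsilon> h K. \<epsilon> > 0 \<Longrightarrow> 0 < h \<Longrightarrow> h \<le> hmax \<Longrightarrow> K \<ge> 1 \<Longrightarrow>
      \<exists>i\<in>{1..K}. (L2norm \<Omega> (\<lambda>x. u h i x - udag x))\<^sup>2 \<le> (2 * norm (z - S udag) + 2 * \<delta> hmax + 2 * M1) * \<delta> h * gam \<alpha> K
        + ((2 * M1 * norm (z - S udag)) * R\<^sup>2 / 2 / \<epsilon>\<^sup>2 + (norm w)\<^sup>2 / 2) / gam \<alpha> K + (2 * norm w) * \<delta> h
        + (R * (2 * BU) * c) * \<epsilon> powr \<kappa>"
      by (rule key[OF I pI swI R R0 mb' less_imp_le[OF c] Ma dmono]) auto
  qed
qed

end
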